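(* Let $G=(V,E)$ be a nice graph that is not algebraic $(1,5)$-choosable, such that every nice graph with fewer vertices than $G$ is algebraic $(1,5)$-choosable, and let $J$ be a good subset of $V$ of minimum size among all good subsets. If $e=\{i,i'\}\in E_{J,2}$ and $d_{G_{J,3}}(i)\ge2$, then $i$ has at least two neighbours in $J$ that are not special neighbours of $i$.
   Context: All graphs are finite and simple with vertex set $\{1,\dots,n\}$; $E(i)$ is the set of edges incident to $i$. An edge is isolated if both its ends have degree $1$; a graph is nice if it has no isolated edges. For a graph $H=(V,E)$, $P_H=\prod_{\{i,j\}\in E,\ i<j}(\sum_{e\in E(i)}x_e-\sum_{e\in E(j)}x_e)$ (empty product $=1$); $H$ is algebraic $(1,b)$-choosable if there is $K:E\to\mathbb{N}$ with $\sum_eK(e)=|E|$, $K(e)\le b-1$ for all $e$, and the coefficient of $\prod_ex_e^{K(e)}$ in $P_H$ nonzero. For $J\subseteq V$: $E_{J,2}$ is the set of isolated edges of $G-J$; $E_{J,3}$ the edges with exactly one end in $J$; $E_{J,4}$ the edges with both ends in $J$; $G_{J,3}=(V,E_{J,3})$, $G_{J,4}=(J,E_{J,4})$; $d_{G_{J,3}}(v)$ is the degree of $v$ in $G_{J,3}$. For $i\in V\setminus J$, if $N_{G_{J,3}}(i)=\{j\}$ then $i$ is a private neighbour of $j$; other vertices of $N_{G_{J,3}}(j)$ are non-private neighbours of $j$. For $\{i,j\}\in E_{J,3}$ with $j\in J$: if $j$ has a private neighbour and $i$ is the only non-private neighbour of $j$, then $j$ is a special neighbour of $i$. $J$ is a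 good subset if $J\ne\emptyset$ and: (J1) $G_{J,4}$ has maximum degree at most $1$; (J2) $G_{J,3}$ has no isolated edges; (J3) each $j\in J$ has at most one private neighbour; (J4) for each $e=\{j,j'\}\in E_{J,4}$ there is $i_e\in V\setminus J$ with $\{j,j'\}\subseteq N_{G_{J,3}}(i_e)$, neither $j$ nor $j'$ has a private neighbour, and $i_e\ne i_{e'}$ for distinct $e,e'\in E_{J,4}$; (J5) for every $e\in E_{J,2}$, each end vertex of $e$ has a neighbour in $J$. *)

theory Defs
  imports Main "HOL-Library.Poly_Mapping"
begin

definition simple_graph :: "nat \<Rightarrow> nat set set \<Rightarrow> bool" where
  "simple_graph n E \<longleftrightarrow> (\<forall>e\<in>E. \<exists>i j. e = {i, j} \<and> i \<noteq> j \<and> i \<in> {1..n} \<and> j \<in> {1..n})"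

definition inc :: "nat set set \<Rightarrow> nat \<Rightarrow> nat set set" where
  "inc E i = {e \<in> E. i \<in> e}"

definition deg :: "nat set set \<Rightarrow> nat \<Rightarrow> nat" where
  "deg E i = card (inc E i)"

definition nbrs :: "nat set set \<Rightarrow> nat \<Rightarrow> nat set" where
  "nbrs E i = {j. {i, j} \<in> E}"

definition isolated_edges :: "nat set set \<Rightarrow> nat set set" where
  "isolated_edges E = {e \<in> E. \<forall>v\<in>e. deg E v = 1}"

definition nice :: "nat set set \<Rightarrow> bool" where
  "nice E \<longleftrightarrow> isolated_edges E = {}"

text \<open>Multivariate polynomials in variables x_e (e an edge) with integer coefficients,
  represented via HOL-Library.Poly_Mapping: monomials are finitely supported exponent maps.\<close>

type_synonym mpoly = "(nat set \<Rightarrow>\<^sub>0 nat) \<Rightarrow>\<^sub>0 int"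

definition Var :: "nat set \<Rightarrow> mpoly" where
  "Var e = Poly_Mapping.single (Poly_Mapping.single e 1) 1"

definition graph_poly :: "nat set set \<Rightarrow> mpoly" where
  "graph_poly E = (\<Prod>e\<in>E. (\<Sum>f\<in>inc E (Min e). Var f) - (\<Sum>f\<in>inc E (Max e). Var f))"

definition monomial_exp :: "nat set set \<Rightarrow> (nat set \<Rightarrow> nat) \<Rightarrow> (nat set \<Rightarrow>\<^sub>0 nat)" where
  "monomial_exp E K = (\<Sum>e\<in>E. Poly_Mapping.single e (K e))"

definition alg_1_choosable :: "nat \<Rightarrow> nat set set \<Rightarrow> bool" where
  "alg_1_choosable b E \<longleftrightarrow> (\<exists>K :: nat set \<Rightarrow> nat.
      (\<Sum>e\<in>E. K e) = card E \<and> (\<forall>e\<in>E. K e \<le> b - 1) \<and>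
      Poly_Mapping.lookup (graph_poly E) (monomial_exp E K) \<noteq> 0)"


definition E2 :: "nat set set \<Rightarrow> nat set \<Rightarrow> nat set set" where
  "E2 E J = isolated_edges {e \<in> E. e \<inter> J = {}}"

definition E3 :: "nat set set \<Rightarrow> nat set \<Rightarrow> nat set set" where
  "E3 E J = {e \<in> E. card (e \<inter> J) = 1}"

definition E4 :: "nat set set \<Rightarrow> nat set \<Rightarrow> nat set set" where
  "E4 E J = {e \<in> E. e \<subseteq> J}"

definition private_nbr :: "nat set \<Rightarrow> nat set set \<Rightarrow> nat set \<Rightarrow> nat \<Rightarrow> nat \<Rightarrow> bool" where
  "private_nbr V E J i j \<longleftrightarrow> i \<in> V - J \<and> nbrs (E3 E J) i = {j}"

definition has_private :: "nat set \<Rightarrow> nat set set \<Rightarrow> nat set \<Rightarrow> nat \<Rightarrow> bool" where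
  "has_private V E J j \<longleftrightarrow> (\<exists>i. private_nbr V E J i j)"

definition nonprivate_nbrs :: "nat set \<Rightarrow> nat set set \<Rightarrow> nat set \<Rightarrow> nat \<Rightarrow> nat set" where
  "nonprivate_nbrs V E J j = {i \<in> nbrs (E3 E J) j. \<not> private_nbr V E J i j}"

definition special_nbr :: "nat set \<Rightarrow> nat set set \<Rightarrow> nat set \<Rightarrow> nat \<Rightarrow> nat \<Rightarrow> bool" where
  "special_nbr V E J j i \<longleftrightarrow> {i, j} \<in> E3 E J \<and> j \<in> J \<and>
      has_private V E J j \<and> nonprivate_nbrs V E J j = {i}"
  \<comment> \<open>j is a special neighbour of i\<close>

definition good_subset :: "nat set \<Rightarrow> nat set set \<Rightarrow> nat set \<Rightarrow> bool" where
  "good_subset V E J \<longleftrightarrow> J \<subseteq> V \<and> J \<noteq> {} \<and>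
     (\<forall>v\<in>J. deg (E4 E J) v \<le> 1) \<and>
     nice (E3 E J) \<and>
     (\<forall>j\<in>J. card {i. private_nbr V E J i j} \<le> 1) \<and>
     (\<exists>ie :: nat set \<Rightarrow> nat. inj_on ie (E4 E J) \<and>
        (\<forall>e\<in>E4 E J. ie e \<in> V - J \<and> e \<subseteq> nbrs (E3 E J) (ie e) \<and>
                     (\<forall>j\<in>e. \<not> has_private V E J j))) \<and>
     (\<forall>e\<in>E2 E J. \<forall>v\<in>e. \<exists>j\<in>J. {v, j} \<in> E)"

end

theory Submission
  imports Defs
begin


definition omega :: "(nat set \<Rightarrow> nat) \<Rightarrow> (nat set \<Rightarrow>\<^sub>0 nat) \<Rightarrow> nat" where
  "omega w m = (\<Sum>h\<in>Poly_Mapping.keys m. w h * Poly_Mapping.lookup m h)"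

lemma omega_superset:
  "finite S \<Longrightarrow> Poly_Mapping.keys m \<subseteq> S \<Longrightarrow> omega w m = (\<Sum>h\<in>S. w h * Poly_Mapping.lookup m h)"
  unfolding omega_def by (rule sum.mono_neutral_left) (auto simp: in_keys_iff)

lemma omega_add: "omega w (m1 + m2) = omega w m1 + omega w m2"
proof -
  let ?S = "Poly_Mapping.keys m1 \<union> Poly_Mapping.keys m2"
  have f: "finite ?S" by simp
  have "omega w (m1 + m2) = (\<Sum>h\<in>?S. w h * Poly_Mapping.lookup (m1+m2) h)"
    by (rule omega_superset[OF f]) (simp add: keys_add)
  also have "\<dots> = (\<Sum>h\<in>?S. w h * Poly_Mapping.lookup m1 h) + (\<Sum>h\<in>?S. w h * Poly_Mapping.lookup m2 h)"
    by (simp add: lookup_add algebra_simps sum.distrib)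
  also have "\<dots> = omega w m1 + omega w m2"
    by (simp add: omega_superset[OF f])
  finally show ?thesis .
qed

lemma omega_zero [simp]: "omega w 0 = 0"
  by (simp add: omega_def)

lemma omega_single [simp]: "omega w (Poly_Mapping.single h k) = w h * k"
  by (cases "k = 0") (simp_all add: omega_def)

lemma omega_sum: "omega w (\<Sum>x\<in>S. f x) = (\<Sum>x\<in>S. omega w (f x))"
  by (induction S rule: infinite_finite_induct) (simp_all add: omega_add)

definition homog :: "(nat set \<Rightarrow> nat) \<Rightarrow> nat \<Rightarrow> mpoly \<Rightarrow> bool" where
  "homog w d p \<longleftrightarrow> (\<forall>m\<in>Poly_Mapping.keys p. omega w m = d)"

definition high :: "(nat set \<Rightarrow> nat) \<Rightarrow> nat \<Rightarrow> mpoly \<Rightarrow> bool" where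
  "high w d p \<longleftrightarrow> (\<forall>m\<in>Poly_Mapping.keys p. omega w m > d)"

definition geq :: "(nat set \<Rightarrow> nat) \<Rightarrow> nat \<Rightarrow> mpoly \<Rightarrow> bool" where
  "geq w d p \<longleftrightarrow> (\<forall>m\<in>Poly_Mapping.keys p. omega w m \<ge> d)"

lemma keys_mult_obtain:
  assumes "m \<in> Poly_Mapping.keys (p * q)"
  obtains a b where "a \<in> Poly_Mapping.keys p" "b \<in> Poly_Mapping.keys q" "m = a + b"
  using keys_mult[of p q] assms by blast

lemma homog_mult: "homog w d1 p \<Longrightarrow> homog w d2 q \<Longrightarrow> homog w (d1+d2) (p*q)"
  unfolding homog_def by (auto elim!: keys_mult_obtain simp: omega_add)

lemma high_mult1: "high w d1 p \<Longrightarrow> geq w d2 q \<Longrightarrow> high w (d1+d2) (p*q)"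
  unfolding high_def geq_def by (fastforce elim!: keys_mult_obtain simp: omega_add)

lemma high_mult2: "homog w d1 p \<Longrightarrow> high w d2 q \<Longrightarrow> high w (d1+d2) (p*q)"
  unfolding high_def homog_def by (fastforce elim!: keys_mult_obtain simp: omega_add)

lemma high_add: "high w d p \<Longrightarrow> high w d q \<Longrightarrow> high w d (p+q)"
  unfolding high_def using keys_add[of p q] by blast

lemma high_geq: "high w d p \<Longrightarrow> geq w d p"
  unfolding high_def geq_def by auto

lemma homog_geq: "homog w d p \<Longrightarrow> geq w d p"
  unfolding homog_def geq_def by auto

lemma geq_add: "geq w d p \<Longrightarrow> geq w d q \<Longrightarrow> geq w d (p+q)"
  unfolding geq_def using keys_add[of p q] by blast

lemma homog_one: "homog w 0 1"
  by (simp add: homog_def)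

lemma high_zero: "high w d 0"
  by (simp add: high_def)

lemma prod_split:
  assumes "finite I"
    and "\<forall>j\<in>I. homog w (d j) (a j) \<and> high w (d j) (b j)"
  shows "homog w (\<Sum>j\<in>I. d j) (\<Prod>j\<in>I. a j) \<and>
         high w (\<Sum>j\<in>I. d j) ((\<Prod>j\<in>I. a j + b j) - (\<Prod>j\<in>I. a j))"
  using assms
proof (induction I rule: finite_induct)
  case empty
  then show ?case by (simp add: homog_one high_zero)
next
  case (insert x I)
  let ?A = "\<Prod>j\<in>I. a j" and ?B = "\<Prod>j\<in>I. a j + b j"
  from insert have IH: "homog w (\<Sum>j\<in>I. d j) ?A" "high w (\<Sum>j\<in>I. d j) (?B - ?A)" by auto
  from insert have hx: "homog w (d x) (a x)" "high w (d x) (b x)" by auto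
  have "homog w (d x + (\<Sum>j\<in>I. d j)) (a x * ?A)" using homog_mult[OF hx(1) IH(1)] .
  moreover
  have eq: "(a x + b x) * ?B - a x * ?A = a x * (?B - ?A) + b x * ?B"
    by (simp add: algebra_simps)
  have g: "geq w (\<Sum>j\<in>I. d j) ?B"
  proof -
    have "?B = ?A + (?B - ?A)" by simp
    moreover have "geq w (\<Sum>j\<in>I. d j) (?A + (?B - ?A))"
      by (rule geq_add[OF homog_geq[OF IH(1)] high_geq[OF IH(2)]])
    ultimately show ?thesis by simp
  qed
  have "high w (d x + (\<Sum>j\<in>I. d j)) (a x * (?B - ?A) + b x * ?B)"
    by (rule high_add[OF high_mult2[OF hx(1) IH(2)] high_mult1[OF hx(2) g]])
  ultimately show ?case using insert by (simp add: eq)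
qed

lemma prod_split_lookup:
  assumes "finite I"
    and "\<forall>j\<in>I. homog w (d j) (a j) \<and> high w (d j) (b j)"
    and "omega w t = (\<Sum>j\<in>I. d j)"
  shows "Poly_Mapping.lookup (\<Prod>j\<in>I. a j + b j) t = Poly_Mapping.lookup (\<Prod>j\<in>I. a j) t"
proof -
  have "high w (\<Sum>j\<in>I. d j) ((\<Prod>j\<in>I. a j + b j) - (\<Prod>j\<in>I. a j))"
    using prod_split[OF assms(1,2)] by blast
  then have "t \<notin> Poly_Mapping.keys ((\<Prod>j\<in>I. a j + b j) - (\<Prod>j\<in>I. a j))"
    using assms(3) unfolding high_def by auto
  then show ?thesis by (simp add: in_keys_iff lookup_minus)
qed

lemma lookup_mult_single:
  fixes p :: mpoly
  shows "Poly_Mapping.lookup (p * Poly_Mapping.single k c) (l + k) = Poly_Mapping.lookup p l * c"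
proof -
  have "Poly_Mapping.lookup (p * Poly_Mapping.single k c) (l + k)
      = (\<Sum>a. Poly_Mapping.lookup p a * (\<Sum>q. Poly_Mapping.lookup (Poly_Mapping.single k c) q when l + k = a + q))"
    by (simp add: lookup_mult)
  also have "\<dots> = (\<Sum>a. Poly_Mapping.lookup p a * (c when l = a))"
  proof -
    have "(\<Sum>q. Poly_Mapping.lookup (Poly_Mapping.single k c) q when l + k = a + q) = (c when l = a)" for a
    proof -
      have "(\<Sum>q. Poly_Mapping.lookup (Poly_Mapping.single k c) q when l + k = a + q)
          = (\<Sum>q. (c when l + k = a + q) when q = k)"
        by (rule Sum_any.cong) (auto simp: lookup_single when_def)
      also have "\<dots> = (c when l + k = a + k)" by simp
      also have "\<dots> = (c when l = a)" by (simp add: when_def)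
      finally show ?thesis .
    qed
    then show ?thesis by simp
  qed
  also have "\<dots> = (\<Sum>a. Poly_Mapping.lookup p a * c when a = l)"
    by (rule Sum_any.cong) (auto simp: when_def)
  also have "\<dots> = Poly_Mapping.lookup p l * c" by simp
  finally show ?thesis .
qed


definition Lf :: "nat set set \<Rightarrow> nat set \<Rightarrow> mpoly" where
  "Lf E e = (\<Sum>f\<in>inc E (Min e). Var f) - (\<Sum>f\<in>inc E (Max e). Var f)"

lemma graph_poly_Lf: "graph_poly E = (\<Prod>e\<in>E. Lf E e)"
  by (simp add: graph_poly_def Lf_def)

definition lin :: "nat set set \<Rightarrow> mpoly \<Rightarrow> bool" where
  "lin S p \<longleftrightarrow> (\<forall>m\<in>Poly_Mapping.keys p. \<exists>g\<in>S. m = Poly_Mapping.single g 1)"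

lemma keys_Var: "Poly_Mapping.keys (Var g) = {Poly_Mapping.single g 1}"
  by (simp add: Var_def)

lemma lin_Var: "g \<in> S \<Longrightarrow> lin S (Var g)"
  by (auto simp: lin_def keys_Var)

lemma lin_add: "lin S p \<Longrightarrow> lin S q \<Longrightarrow> lin S (p + q)"
  unfolding lin_def using keys_add[of p q] by blast

lemma lin_uminus: "lin S p \<Longrightarrow> lin S (- p)"
  unfolding lin_def by simp

lemma lin_diff: "lin S p \<Longrightarrow> lin S q \<Longrightarrow> lin S (p - q)"
  using lin_add[of S p "-q"] lin_uminus[of S q] by simp

lemma lin_zero: "lin S 0"
  by (simp add: lin_def)

lemma lin_sum: "(\<And>x. x \<in> A \<Longrightarrow> lin S (f x)) \<Longrightarrow> lin S (sum f A)"
  by (induction A rule: infinite_finite_induct) (auto simp: lin_zero lin_add)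

lemma lin_sum_Var: "A \<subseteq> S \<Longrightarrow> lin S (\<Sum>g\<in>A. Var g)"
  by (rule lin_sum) (auto intro: lin_Var)

lemma lin_high: "lin S p \<Longrightarrow> \<forall>g\<in>S. w g > d \<Longrightarrow> high w d p"
  unfolding lin_def high_def by fastforce

lemma lin_homog: "lin S p \<Longrightarrow> \<forall>g\<in>S. w g = d \<Longrightarrow> homog w d p"
  unfolding lin_def homog_def by fastforce

definition twoset :: "nat set set \<Rightarrow> bool" where
  "twoset E \<longleftrightarrow> (\<forall>g\<in>E. \<exists>x y. g = {x,y} \<and> x \<noteq> y)"

lemma twoset_Min_Max:
  assumes "twoset E" "e \<in> E"
  shows "Min e \<in> e" "Max e \<in> e" "Min e \<noteq> Max e" "e = {Min e, Max e}"
proof -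
  obtain x y where e: "e = {x,y}" "x \<noteq> y" using assms unfolding twoset_def by blast
  have m: "Min e = min x y" "Max e = max x y" using e by simp_all
  show "Min e \<in> e" "Max e \<in> e" "Min e \<noteq> Max e" "e = {Min e, Max e}"
    unfolding m using e by (auto simp: min_def max_def)
qed

lemma inc_inter:
  assumes "twoset E" "e \<in> E"
  shows "inc E (Min e) \<inter> inc E (Max e) = {e}"
proof -
  note mm = twoset_Min_Max(1-3)[OF assms]
  note me = twoset_Min_Max(4)[OF assms]
  have *: "g = e" if "g \<in> E" "Min e \<in> g" "Max e \<in> g" for g
  proof -
    have "\<exists>x y. g = {x,y} \<and> x \<noteq> y" using assms(1) that(1) unfolding twoset_def by (rule bspec)
    then obtain x y where g: "g = {x,y}" "x \<noteq> y" by auto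
    have a: "Min e \<in> {x,y}" "Max e \<in> {x,y}" using that(2,3) g(1) by simp_all
    have "g = {Min e, Max e}" unfolding g(1) using a mm(3) g(2) by auto
    then show ?thesis using me[symmetric] by simp
  qed
  show ?thesis
  proof (rule set_eqI)
    fix g
    show "g \<in> inc E (Min e) \<inter> inc E (Max e) \<longleftrightarrow> g \<in> {e}"
    proof
      assume "g \<in> inc E (Min e) \<inter> inc E (Max e)"
      then have "g \<in> E" "Min e \<in> g" "Max e \<in> g" by (auto simp: inc_def)
      then show "g \<in> {e}" using * by blast
    next
      assume "g \<in> {e}"
      then show "g \<in> inc E (Min e) \<inter> inc E (Max e)" using mm assms(2) by (simp add: inc_def)
    qed
  qed
qed

lemma finite_inc: "finite E \<Longrightarrow> finite (inc E v)"
  unfolding inc_def by (rule finite_subset[of _ E]) auto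

lemma Lf_split:
  assumes fin: "finite E" and two: "twoset E" and e: "e \<in> E"
    and h: "h \<in> (inc E (Min e) \<union> inc E (Max e)) - {e}"
  shows "\<exists>r. Lf E e = (if h \<in> inc E (Min e) then Var h else - Var h) + r \<and>
             lin ((inc E (Min e) \<union> inc E (Max e)) - {e,h}) r"
proof -
  define A where "A = inc E (Min e)"
  define B where "B = inc E (Max e)"
  have fA: "finite A" and fB: "finite B" using fin by (simp_all add: A_def B_def finite_inc)
  have AB: "A \<inter> B = {e}" using inc_inter[OF two e] by (simp add: A_def B_def)
  have eA: "e \<in> A" and eB: "e \<in> B" using AB by auto
  have sA: "(\<Sum>f\<in>A. Var f) = Var e + (\<Sum>f\<in>A-{e}. Var f)" using fA eA by (simp add: sum.remove)
  have sB: "(\<Sum>f\<in>B. Var f) = Var e + (\<Sum>f\<in>B-{e}. Var f)" using fB eB by (simp add: sum.remove)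
  have L: "Lf E e = (\<Sum>f\<in>A-{e}. Var f) - (\<Sum>f\<in>B-{e}. Var f)"
    by (simp add: Lf_def A_def[symmetric] B_def[symmetric] sA sB)
  show ?thesis
  proof (cases "h \<in> A")
    case True
    have hB: "h \<notin> B" using AB True h by auto
    have s: "(\<Sum>f\<in>A-{e}. Var f) = Var h + (\<Sum>f\<in>A-{e}-{h}. Var f)"
      using fA True h by (simp add: sum.remove)
    let ?r = "(\<Sum>f\<in>A-{e}-{h}. Var f) - (\<Sum>f\<in>B-{e}. Var f)"
    have "lin ((A \<union> B) - {e,h}) ?r"
      by (rule lin_diff; rule lin_sum_Var) (use hB in auto)
    moreover have "Lf E e = Var h + ?r" using L s by simp
    ultimately show ?thesis using True by (auto simp: A_def B_def)
  next
    case False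
    have hB: "h \<in> B" using False h by (auto simp: A_def B_def)
    have s: "(\<Sum>f\<in>B-{e}. Var f) = Var h + (\<Sum>f\<in>B-{e}-{h}. Var f)"
      using fB hB h by (simp add: sum.remove)
    let ?r = "(\<Sum>f\<in>A-{e}. Var f) - (\<Sum>f\<in>B-{e}-{h}. Var f)"
    have "lin ((A \<union> B) - {e,h}) ?r"
      by (rule lin_diff; rule lin_sum_Var) (use False in auto)
    moreover have "Lf E e = - Var h + ?r" using L s by simp
    ultimately show ?thesis using False by (auto simp: A_def B_def)
  qed
qed

lemma sum_inc_split:
  assumes "finite E" "E' \<subseteq> E"
  shows "(\<Sum>f\<in>inc E v. Var f) = (\<Sum>f\<in>inc E' v. Var f) + (\<Sum>f\<in>inc E v - E'. Var f)"
proof -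
  have "inc E v = inc E' v \<union> (inc E v - E')" using assms by (auto simp: inc_def)
  moreover have "inc E' v \<inter> (inc E v - E') = {}" by (auto simp: inc_def)
  moreover have "finite (inc E' v)" "finite (inc E v - E')"
    using assms by (simp_all add: finite_inc finite_subset)
  ultimately show ?thesis
    using sum.union_disjoint[of "inc E' v" "inc E v - E'" Var] by simp
qed

lemma Lf_sub_split:
  assumes "finite E" "E' \<subseteq> E"
  shows "\<exists>r. Lf E e = Lf E' e + r \<and> lin ((inc E (Min e) \<union> inc E (Max e)) - E') r"
proof -
  let ?r = "(\<Sum>f\<in>inc E (Min e) - E'. Var f) - (\<Sum>f\<in>inc E (Max e) - E'. Var f)"
  have "Lf E e = Lf E' e + ?r"
    unfolding Lf_def using sum_inc_split[OF assms] by (simp add: algebra_simps)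
  moreover have "lin ((inc E (Min e) \<union> inc E (Max e)) - E') ?r"
    by (rule lin_diff; rule lin_sum_Var) auto
  ultimately show ?thesis by blast
qed

lemma Lf_lin: "lin E (Lf E e)"
  unfolding Lf_def by (rule lin_diff; rule lin_sum_Var) (auto simp: inc_def)

lemma prod_single:
  "(\<Prod>f\<in>F. Poly_Mapping.single (k f) (c f) :: mpoly) =
     Poly_Mapping.single (\<Sum>f\<in>F. k f) (\<Prod>f\<in>F. c f)"
  by (induction F rule: infinite_finite_induct) (simp_all add: mult_single)

lemma extension:
  assumes fin: "finite E" and sub: "E' \<subseteq> E" and two: "twoset E"
    and wE': "\<forall>g\<in>E'. w g = W"
    and wcross: "\<forall>e\<in>E'. \<forall>g\<in>E - E'. g \<inter> e \<noteq> {} \<longrightarrow> w g > W"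
    and hF: "\<forall>f\<in>E - E'. h f \<in> (inc E (Min f) \<union> inc E (Max f)) - {f}"
    and wF: "\<forall>f\<in>E - E'. \<forall>g\<in>(inc E (Min f) \<union> inc E (Max f)) - {f, h f}. w g > w (h f)"
    and mu: "omega w \<mu> = W * card E'"
    and nz: "Poly_Mapping.lookup (graph_poly E') \<mu> \<noteq> 0"
  shows "Poly_Mapping.lookup (graph_poly E) (\<mu> + (\<Sum>f\<in>E - E'. Poly_Mapping.single (h f) 1)) \<noteq> 0"
proof -
  define sg where "sg f = (if h f \<in> inc E (Min f) then 1 else -1 :: int)" for f
  define a where "a e = (if e \<in> E' then Lf E' e
                         else Poly_Mapping.single (Poly_Mapping.single (h e) 1) (sg e))" for e
  define b where "b e = Lf E e - a e" for e
  define d where "d e = (if e \<in> E' then W else w (h e))" for e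
  have fE': "finite E'" using fin sub finite_subset by auto
  have split: "\<forall>j\<in>E. homog w (d j) (a j) \<and> high w (d j) (b j)"
  proof
    fix e assume eE: "e \<in> E"
    show "homog w (d e) (a e) \<and> high w (d e) (b e)"
    proof (cases "e \<in> E'")
      case True
      have "homog w W (Lf E' e)"
        by (rule lin_homog[OF Lf_lin]) (use wE' in auto)
      moreover obtain r where r: "Lf E e = Lf E' e + r" "lin ((inc E (Min e) \<union> inc E (Max e)) - E') r"
        using Lf_sub_split[OF fin sub, of e] by blast
      have "high w W r"
      proof (rule lin_high[OF r(2)], rule ballI)
        fix g assume g: "g \<in> (inc E (Min e) \<union> inc E (Max e)) - E'"
        have "Min e \<in> e" "Max e \<in> e" using twoset_Min_Max[OF two eE] by auto
        then have "g \<inter> e \<noteq> {}" "g \<in> E - E'" using g by (auto simp: inc_def)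
        then show "w g > W" using wcross True by auto
      qed
      ultimately show ?thesis using True r(1) by (simp add: a_def b_def d_def)
    next
      case False
      then have hf: "h e \<in> (inc E (Min e) \<union> inc E (Max e)) - {e}" using hF eE by auto
      obtain r where r: "Lf E e = (if h e \<in> inc E (Min e) then Var (h e) else - Var (h e)) + r"
        "lin ((inc E (Min e) \<union> inc E (Max e)) - {e, h e}) r"
        using Lf_split[OF fin two eE hf] by blast
      have ae: "a e = (if h e \<in> inc E (Min e) then Var (h e) else - Var (h e))"
        using False by (simp add: a_def sg_def Var_def single_uminus)
      have "homog w (w (h e)) (a e)"
        unfolding homog_def ae by (auto simp: keys_Var)
      moreover have "high w (w (h e)) r"
        by (rule lin_high[OF r(2)]) (use wF False eE in auto)
      ultimately show ?thesis using False r(1) ae by (simp add: b_def d_def)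
    qed
  qed
  define \<kappa> where "\<kappa> = (\<Sum>f\<in>E - E'. Poly_Mapping.single (h f) (1::nat))"
  have dsum: "(\<Sum>j\<in>E. d j) = W * card E' + (\<Sum>f\<in>E - E'. w (h f))"
  proof -
    have "(\<Sum>j\<in>E. d j) = (\<Sum>j\<in>E'. d j) + (\<Sum>j\<in>E - E'. d j)"
      using sum.subset_diff[OF sub fin, of d] by (simp add: add.commute)
    also have "(\<Sum>j\<in>E'. d j) = W * card E'" by (simp add: d_def)
    also have "(\<Sum>j\<in>E - E'. d j) = (\<Sum>f\<in>E - E'. w (h f))" by (simp add: d_def)
    finally show ?thesis .
  qed
  have om: "omega w (\<mu> + \<kappa>) = (\<Sum>j\<in>E. d j)"
    by (simp add: omega_add \<kappa>_def omega_sum mu dsum)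
  have "graph_poly E = (\<Prod>j\<in>E. a j + b j)" by (simp add: graph_poly_Lf b_def)
  then have L1: "Poly_Mapping.lookup (graph_poly E) (\<mu> + \<kappa>) = Poly_Mapping.lookup (\<Prod>j\<in>E. a j) (\<mu> + \<kappa>)"
    using prod_split_lookup[OF fin split om] by simp
  have "(\<Prod>j\<in>E. a j) = (\<Prod>j\<in>E'. a j) * (\<Prod>j\<in>E - E'. a j)"
    using prod.subset_diff[OF sub fin, of a] by (simp add: mult.commute)
  also have "(\<Prod>j\<in>E'. a j) = graph_poly E'" by (simp add: a_def graph_poly_Lf)
  also have "(\<Prod>j\<in>E - E'. a j) = Poly_Mapping.single \<kappa> (\<Prod>f\<in>E - E'. sg f)"
    by (simp add: a_def prod_single \<kappa>_def)
  finally have "Poly_Mapping.lookup (\<Prod>j\<in>E. a j) (\<mu> + \<kappa>) =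
      Poly_Mapping.lookup (graph_poly E') \<mu> * (\<Prod>f\<in>E - E'. sg f)"
    by (simp add: lookup_mult_single)
  moreover have "(\<Prod>f\<in>E - E'. sg f) \<noteq> 0"
    by (subst prod_zero_iff) (use fin in \<open>auto simp: sg_def\<close>)
  ultimately show ?thesis using nz L1 \<kappa>_def by simp
qed


definition rm :: "(nat set \<Rightarrow> nat set) \<Rightarrow> (nat set \<Rightarrow>\<^sub>0 nat) \<Rightarrow> (nat set \<Rightarrow>\<^sub>0 nat)" where
  "rm g m = (\<Sum>h\<in>Poly_Mapping.keys m. Poly_Mapping.single (g h) (Poly_Mapping.lookup m h))"

lemma rm_superset:
  "finite S \<Longrightarrow> Poly_Mapping.keys m \<subseteq> S \<Longrightarrow> rm g m = (\<Sum>h\<in>S. Poly_Mapping.single (g h) (Poly_Mapping.lookup m h))"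
  unfolding rm_def by (rule sum.mono_neutral_left) (auto simp: in_keys_iff)

lemma rm_add: "rm g (m1 + m2) = rm g m1 + rm g m2"
proof -
  let ?S = "Poly_Mapping.keys m1 \<union> Poly_Mapping.keys m2"
  have f: "finite ?S" by simp
  have "rm g (m1 + m2) = (\<Sum>h\<in>?S. Poly_Mapping.single (g h) (Poly_Mapping.lookup (m1+m2) h))"
    by (rule rm_superset[OF f]) (simp add: keys_add)
  also have "\<dots> = (\<Sum>h\<in>?S. Poly_Mapping.single (g h) (Poly_Mapping.lookup m1 h)) +
                  (\<Sum>h\<in>?S. Poly_Mapping.single (g h) (Poly_Mapping.lookup m2 h))"
    by (simp add: lookup_add single_add sum.distrib)
  also have "\<dots> = rm g m1 + rm g m2"
    by (simp add: rm_superset[OF f])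
  finally show ?thesis .
qed

lemma rm_zero [simp]: "rm g 0 = 0"
  by (simp add: rm_def)

lemma rm_single [simp]: "rm g (Poly_Mapping.single h k) = Poly_Mapping.single (g h) k"
  by (cases "k = 0") (simp_all add: rm_def)

lemma rm_sum: "rm g (\<Sum>x\<in>A. f x) = (\<Sum>x\<in>A. rm g (f x))"
  by (induction A rule: infinite_finite_induct) (simp_all add: rm_add)

lemma lookup_rm:
  assumes "inj_on g S" "Poly_Mapping.keys m \<subseteq> S" "h \<in> S"
  shows "Poly_Mapping.lookup (rm g m) (g h) = Poly_Mapping.lookup m h"
proof -
  have "Poly_Mapping.lookup (rm g m) (g h) =
        (\<Sum>h'\<in>Poly_Mapping.keys m. Poly_Mapping.lookup (Poly_Mapping.single (g h') (Poly_Mapping.lookup m h')) (g h))"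
    by (simp add: rm_def lookup_sum)
  also have "\<dots> = (\<Sum>h'\<in>Poly_Mapping.keys m. if h' = h then Poly_Mapping.lookup m h else 0)"
  proof (rule sum.cong[OF refl])
    fix h' assume "h' \<in> Poly_Mapping.keys m"
    then have "h' \<in> S" using assms by auto
    then have "g h' = g h \<longleftrightarrow> h' = h" using assms(1,3) by (auto dest: inj_onD)
    then show "Poly_Mapping.lookup (Poly_Mapping.single (g h') (Poly_Mapping.lookup m h')) (g h) =
               (if h' = h then Poly_Mapping.lookup m h else 0)"
      by (auto simp: lookup_single when_def)
  qed
  also have "\<dots> = Poly_Mapping.lookup m h"
    by (auto simp: in_keys_iff)
  finally show ?thesis .
qed

lemma rm_inj:
  assumes "inj_on g S" "Poly_Mapping.keys m1 \<subseteq> S" "Poly_Mapping.keys m2 \<subseteq> S" "rm g m1 = rm g m2"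
  shows "m1 = m2"
proof (rule poly_mapping_eqI)
  fix h
  show "Poly_Mapping.lookup m1 h = Poly_Mapping.lookup m2 h"
  proof (cases "h \<in> S")
    case True
    then show ?thesis using lookup_rm[OF assms(1,2) True] lookup_rm[OF assms(1,3) True] assms(4) by simp
  next
    case False
    then show ?thesis using assms(2,3) by (metis in_mono not_in_keys_iff_lookup_eq_zero)
  qed
qed

definition ren :: "(nat set \<Rightarrow> nat set) \<Rightarrow> mpoly \<Rightarrow> mpoly" where
  "ren g p = frag_extend (\<lambda>m. frag_of (rm g m)) p"

lemma ren_add: "ren g (p + q) = ren g p + ren g q"
  by (simp add: ren_def frag_extend_add)

lemma ren_diff: "ren g (p - q) = ren g p - ren g q"
  by (simp add: ren_def frag_extend_diff)

lemma ren_sum: "finite A \<Longrightarrow> ren g (\<Sum>x\<in>A. f x) = (\<Sum>x\<in>A. ren g (f x))"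
  by (simp add: ren_def frag_extend_sum o_def)

lemma ren_frag_of: "ren g (frag_of m) = frag_of (rm g m)"
  by (simp add: ren_def)

lemma ren_zero: "ren g 0 = 0"
  by (simp add: ren_def)

lemma ren_Var: "ren g (Var e) = Var (g e)"
  unfolding Var_def by (simp add: ren_frag_of)

lemma ren_one: "ren g 1 = 1"
proof -
  have "(1::mpoly) = frag_of 0" by simp
  then show ?thesis by (metis ren_frag_of rm_zero)
qed

lemma ren_mult: "ren g (p * q) = ren g p * ren g q"
proof -
  have "\<forall>q. ren g (p * q) = ren g p * ren g q"
    using subset_UNIV[of "Poly_Mapping.keys p"]
  proof (induction p rule: frag_induction)
    case zero
    then show ?case by (simp add: ren_zero)
  next
    case (one x)
    show ?case
    proof
      fix q :: mpoly
      show "ren g (frag_of x * q) = ren g (frag_of x) * ren g q"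
        using subset_UNIV[of "Poly_Mapping.keys q"]
      proof (induction q rule: frag_induction)
        case zero
        then show ?case by (simp add: ren_zero)
      next
        case (one y)
        then show ?case by (simp add: mult_single ren_frag_of rm_add)
      next
        case (diff a b)
        then show ?case by (simp add: right_diff_distrib ren_diff)
      qed
    qed
  next
    case (diff a b)
    then show ?case by (simp add: left_diff_distrib ren_diff)
  qed
  then show ?thesis by blast
qed

lemma ren_prod: "ren g (\<Prod>x\<in>A. f x) = (\<Prod>x\<in>A. ren g (f x))"
  by (induction A rule: infinite_finite_induct) (simp_all add: ren_one ren_mult)

lemma lookup_ren:
  assumes "inj_on g S" "\<forall>m\<in>Poly_Mapping.keys p. Poly_Mapping.keys m \<subseteq> S" "Poly_Mapping.keys \<mu> \<subseteq> S"
  shows "Poly_Mapping.lookup (ren g p) (rm g \<mu>) = Poly_Mapping.lookup p \<mu>"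
proof -
  have "Poly_Mapping.lookup (ren g p) (rm g \<mu>) =
     (\<Sum>m\<in>Poly_Mapping.keys p. Poly_Mapping.lookup p m * Poly_Mapping.lookup (frag_of (rm g m)) (rm g \<mu>))"
    by (simp add: ren_def frag_extend_def lookup_sum)
  also have "\<dots> = (\<Sum>m\<in>Poly_Mapping.keys p. if m = \<mu> then Poly_Mapping.lookup p m else 0)"
  proof (rule sum.cong[OF refl])
    fix m assume m: "m \<in> Poly_Mapping.keys p"
    have "rm g m = rm g \<mu> \<longleftrightarrow> m = \<mu>"
      using rm_inj[OF assms(1) _ assms(3)] assms(2) m by blast
    then show "Poly_Mapping.lookup p m * Poly_Mapping.lookup (frag_of (rm g m)) (rm g \<mu>) =
               (if m = \<mu> then Poly_Mapping.lookup p m else 0)"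
      by (auto simp: lookup_single when_def)
  qed
  also have "\<dots> = Poly_Mapping.lookup p \<mu>" by (auto simp: in_keys_iff)
  finally show ?thesis .
qed


definition varsin :: "nat set set \<Rightarrow> mpoly \<Rightarrow> bool" where
  "varsin S p \<longleftrightarrow> (\<forall>m\<in>Poly_Mapping.keys p. Poly_Mapping.keys m \<subseteq> S)"

lemma varsin_add: "varsin S p \<Longrightarrow> varsin S q \<Longrightarrow> varsin S (p + q)"
  unfolding varsin_def using keys_add[of p q] by blast

lemma varsin_uminus: "varsin S p \<Longrightarrow> varsin S (- p)"
  unfolding varsin_def by simp

lemma varsin_diff: "varsin S p \<Longrightarrow> varsin S q \<Longrightarrow> varsin S (p - q)"
  using varsin_add[of S p "-q"] varsin_uminus[of S q] by simp

lemma varsin_mult: "varsin S p \<Longrightarrow> varsin S q \<Longrightarrow> varsin S (p * q)"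
  unfolding varsin_def
  by (auto elim!: keys_mult_obtain dest!: subsetD[OF keys_add])

lemma varsin_one: "varsin S 1"
  by (simp add: varsin_def)

lemma varsin_zero: "varsin S 0"
  by (simp add: varsin_def)

lemma varsin_sum: "(\<And>x. x \<in> A \<Longrightarrow> varsin S (f x)) \<Longrightarrow> varsin S (sum f A)"
  by (induction A rule: infinite_finite_induct) (auto simp: varsin_zero varsin_add)

lemma varsin_prod: "(\<And>x. x \<in> A \<Longrightarrow> varsin S (f x)) \<Longrightarrow> varsin S (prod f A)"
  by (induction A rule: infinite_finite_induct) (auto simp: varsin_one varsin_mult)

lemma varsin_Var: "e \<in> S \<Longrightarrow> varsin S (Var e)"
  by (simp add: varsin_def keys_Var)

lemma varsin_graph_poly: "varsin E (graph_poly E)"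
  unfolding graph_poly_Lf Lf_def
  by (intro varsin_prod varsin_diff varsin_sum varsin_Var) (auto simp: inc_def)

lemma keys_monomial_exp: "Poly_Mapping.keys (monomial_exp E K) \<subseteq> E"
  unfolding monomial_exp_def
  using keys_sum[of "\<lambda>e. Poly_Mapping.single e (K e)" E] by auto

definition edges_in :: "nat set \<Rightarrow> nat set set \<Rightarrow> bool" where
  "edges_in V E \<longleftrightarrow> (\<forall>e\<in>E. \<exists>x y. e = {x,y} \<and> x \<noteq> y \<and> x \<in> V \<and> y \<in> V)"

definition ord_inj :: "nat set \<Rightarrow> (nat \<Rightarrow> nat) \<Rightarrow> bool" where
  "ord_inj V f \<longleftrightarrow> (\<forall>x\<in>V. \<forall>y\<in>V. x < y \<longrightarrow> f x < f y)"

lemma ord_inj_inj: assumes "ord_inj V f" shows "inj_on f V"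
proof (rule inj_onI)
  fix x y assume xy: "x \<in> V" "y \<in> V" "f x = f y"
  show "x = y"
  proof (rule ccontr)
    assume "x \<noteq> y"
    then have "x < y \<or> y < x" by arith
    then have "f x < f y \<or> f y < f x" using assms xy(1,2) unfolding ord_inj_def by blast
    then show False using xy(3) by simp
  qed
qed

lemma edges_in_sub: "edges_in V E \<Longrightarrow> e \<in> E \<Longrightarrow> e \<subseteq> V"
  unfolding edges_in_def by auto

lemma Min_image_ord:
  assumes "ord_inj V f" "edges_in V E" "e \<in> E"
  shows "Min (f ` e) = f (Min e)" "Max (f ` e) = f (Max e)"
proof -
  obtain x y where e: "e = {x,y}" "x \<noteq> y" "x \<in> V" "y \<in> V" using assms(2,3) unfolding edges_in_def by blast
  have fe: "f ` e = {f x, f y}" using e(1) by simp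
  have "x < y \<or> y < x" using e(2) by arith
  then have "Min (f ` e) = f (Min e) \<and> Max (f ` e) = f (Max e)"
  proof
    assume "x < y"
    then have "f x < f y" using assms(1) e(3,4) unfolding ord_inj_def by blast
    then show ?thesis
      unfolding fe e(1) using \<open>x < y\<close> by (simp add: min_def max_def)
  next
    assume "y < x"
    then have "f y < f x" using assms(1) e(3,4) unfolding ord_inj_def by blast
    then show ?thesis
      unfolding fe e(1) using \<open>y < x\<close> by (simp add: min_def max_def)
  qed
  then show "Min (f ` e) = f (Min e)" "Max (f ` e) = f (Max e)" by simp_all
qed

lemma inj_on_image_edges:
  assumes "inj_on f V" "edges_in V E"
  shows "inj_on (\<lambda>e. f ` e) E"
proof (rule inj_onI)
  fix a b assume "a \<in> E" "b \<in> E" "f ` a = f ` b"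
  then show "a = b" using inj_on_image_eq_iff[OF assms(1) edges_in_sub[OF assms(2) \<open>a \<in> E\<close>]
      edges_in_sub[OF assms(2) \<open>b \<in> E\<close>]] by simp
qed

lemma inc_image:
  assumes "inj_on f V" "edges_in V E" "v \<in> V"
  shows "inc ((\<lambda>e. f ` e) ` E) (f v) = (\<lambda>e. f ` e) ` inc E v"
proof
  show "inc ((\<lambda>e. f ` e) ` E) (f v) \<subseteq> (\<lambda>e. f ` e) ` inc E v"
  proof
    fix e'' assume "e'' \<in> inc ((\<lambda>e. f ` e) ` E) (f v)"
    then obtain e where e: "e \<in> E" "e'' = f ` e" "f v \<in> f ` e" by (auto simp: inc_def)
    have "e \<subseteq> V" using edges_in_sub[OF assms(2) e(1)] .
    then have "v \<in> e" using e(3) assms(1,3) by (auto dest: inj_onD)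
    then show "e'' \<in> (\<lambda>e. f ` e) ` inc E v" using e by (auto simp: inc_def)
  qed
next
  show "(\<lambda>e. f ` e) ` inc E v \<subseteq> inc ((\<lambda>e. f ` e) ` E) (f v)"
    by (auto simp: inc_def)
qed

lemma ren_sum_inc:
  assumes "inj_on f V" "edges_in V E" "v \<in> V" "finite E"
  shows "ren (\<lambda>e. f ` e) (\<Sum>h\<in>inc E v. Var h) = (\<Sum>h\<in>inc ((\<lambda>e. f ` e) ` E) (f v). Var h)"
proof -
  have sub: "inc E v \<subseteq> E" by (auto simp: inc_def)
  have inj: "inj_on (\<lambda>e. f ` e) (inc E v)"
    using inj_on_subset[OF inj_on_image_edges[OF assms(1,2)] sub] .
  have fi: "finite (inc E v)" using finite_inc[OF assms(4)] .
  have "ren (\<lambda>e. f ` e) (\<Sum>h\<in>inc E v. Var h) = (\<Sum>h\<in>inc E v. ren (\<lambda>e. f ` e) (Var h))"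
    by (rule ren_sum[OF fi])
  also have "\<dots> = (\<Sum>h\<in>inc E v. Var (f ` h))"
    by (rule sum.cong[OF refl]) (rule ren_Var)
  also have "\<dots> = (\<Sum>h\<in>(\<lambda>e. f ` e) ` inc E v. Var h)"
    using sum.reindex[OF inj, of Var] by (simp only: comp_def)
  also have "\<dots> = (\<Sum>h\<in>inc ((\<lambda>e. f ` e) ` E) (f v). Var h)"
  proof -
    have xx: "inc ((\<lambda>e. f ` e) ` E) (f v) = (\<lambda>e. f ` e) ` inc E v" by (rule inc_image[OF assms(1-3)])
    show ?thesis unfolding xx by (rule refl)
  qed
  finally show ?thesis .
qed

lemma ren_graph_poly:
  assumes "ord_inj V f" "edges_in V E" "finite E"
  shows "ren (\<lambda>e. f ` e) (graph_poly E) = graph_poly ((\<lambda>e. f ` e) ` E)"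
proof -
  have inj: "inj_on f V" using ord_inj_inj[OF assms(1)] .
  have MV: "Min e \<in> V" "Max e \<in> V" if "e \<in> E" for e
  proof -
    have "e \<noteq> {}" "finite e" "e \<subseteq> V" using assms(2) that unfolding edges_in_def by auto
    then show "Min e \<in> V" "Max e \<in> V" using Min_in Max_in by blast+
  qed
  have "ren (\<lambda>e. f ` e) (graph_poly E) = (\<Prod>e\<in>E. ren (\<lambda>e. f ` e) (Lf E e))"
    by (simp add: graph_poly_Lf ren_prod)
  also have "\<dots> = (\<Prod>e\<in>E. Lf ((\<lambda>e. f ` e) ` E) (f ` e))"
  proof (rule prod.cong[OF refl])
    fix e assume e: "e \<in> E"
    have a: "ren (\<lambda>e. f ` e) (\<Sum>h\<in>inc E (Min e). Var h) = (\<Sum>h\<in>inc ((\<lambda>e. f ` e) ` E) (f (Min e)). Var h)"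
      by (rule ren_sum_inc[OF inj assms(2) MV(1)[OF e] assms(3)])
    have b: "ren (\<lambda>e. f ` e) (\<Sum>h\<in>inc E (Max e). Var h) = (\<Sum>h\<in>inc ((\<lambda>e. f ` e) ` E) (f (Max e)). Var h)"
      by (rule ren_sum_inc[OF inj assms(2) MV(2)[OF e] assms(3)])
    have c: "Min (f ` e) = f (Min e)" "Max (f ` e) = f (Max e)"
      by (rule Min_image_ord[OF assms(1,2) e])+
    show "ren (\<lambda>e. f ` e) (Lf E e) = Lf ((\<lambda>e. f ` e) ` E) (f ` e)"
      unfolding Lf_def ren_diff a b c by (rule refl)
  qed
  also have "\<dots> = (\<Prod>e\<in>(\<lambda>e. f ` e) ` E. Lf ((\<lambda>e. f ` e) ` E) e)"
    using prod.reindex[OF inj_on_image_edges[OF inj assms(2)], of "Lf ((\<lambda>e. f ` e) ` E)"] by (simp only: comp_def)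
  finally show ?thesis by (simp only: graph_poly_Lf)
qed

lemma choosable_relabel:
  assumes "ord_inj V f" "edges_in V E" "finite E"
    and "alg_1_choosable b ((\<lambda>e. f ` e) ` E)"
  shows "alg_1_choosable b E"
proof -
  let ?g = "\<lambda>e. f ` e"
  have inj: "inj_on ?g E" using inj_on_image_edges[OF ord_inj_inj[OF assms(1)] assms(2)] .
  obtain K where K: "(\<Sum>e\<in>?g ` E. K e) = card (?g ` E)" "\<forall>e\<in>?g ` E. K e \<le> b - 1"
    "Poly_Mapping.lookup (graph_poly (?g ` E)) (monomial_exp (?g ` E) K) \<noteq> 0"
    using assms(4) unfolding alg_1_choosable_def by blast
  define K' where "K' e = K (?g e)" for e
  have s: "(\<Sum>e\<in>E. K' e) = card E"
    using K(1) sum.reindex[OF inj, of K] card_image[OF inj] by (simp add: K'_def)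
  have bnd: "\<forall>e\<in>E. K' e \<le> b - 1" using K(2) by (simp add: K'_def)
  have me: "rm ?g (monomial_exp E K') = monomial_exp (?g ` E) K"
  proof -
    have "rm ?g (monomial_exp E K') = (\<Sum>e\<in>E. Poly_Mapping.single (?g e) (K (?g e)))"
      by (simp add: monomial_exp_def rm_sum K'_def)
    also have "\<dots> = monomial_exp (?g ` E) K"
      unfolding monomial_exp_def using sum.reindex[OF inj, of "\<lambda>e. Poly_Mapping.single e (K e)"] by simp
    finally show ?thesis .
  qed
  have "Poly_Mapping.lookup (graph_poly E) (monomial_exp E K') =
        Poly_Mapping.lookup (ren ?g (graph_poly E)) (rm ?g (monomial_exp E K'))"
    using lookup_ren[OF inj, of "graph_poly E" "monomial_exp E K'"] varsin_graph_poly[of E]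
      keys_monomial_exp[of E K'] unfolding varsin_def by simp
  also have "\<dots> = Poly_Mapping.lookup (graph_poly (?g ` E)) (monomial_exp (?g ` E) K)"
    using ren_graph_poly[OF assms(1-3)] me by simp
  finally have "Poly_Mapping.lookup (graph_poly E) (monomial_exp E K') \<noteq> 0" using K(3) by simp
  then show ?thesis using s bnd unfolding alg_1_choosable_def by blast
qed



definition rankf :: "nat set \<Rightarrow> nat \<Rightarrow> nat" where
  "rankf V v = card {u\<in>V. u < v} + 1"

lemma rankf_ord: assumes "finite V" shows "ord_inj V (rankf V)"
  unfolding ord_inj_def
proof (intro ballI impI)
  fix x y assume xy: "x \<in> V" "y \<in> V" "x < y"
  have "{u\<in>V. u < x} \<subset> {u\<in>V. u < y}" using xy by auto
  then have "card {u\<in>V. u < x} < card {u\<in>V. u < y}"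
    using assms by (intro psubset_card_mono) auto
  then show "rankf V x < rankf V y" by (simp add: rankf_def)
qed

lemma rankf_range: assumes "finite V" "v \<in> V" shows "rankf V v \<in> {1..card V}"
proof -
  have "{u\<in>V. u < v} \<subset> V" using assms(2) by auto
  then have "card {u\<in>V. u < v} < card V" using assms(1) by (intro psubset_card_mono) auto
  then show ?thesis by (simp add: rankf_def)
qed

lemma deg_image:
  assumes "inj_on f V" "edges_in V E" "v \<in> V"
  shows "deg ((\<lambda>e. f ` e) ` E) (f v) = deg E v"
proof -
  have sub: "inc E v \<subseteq> E" by (auto simp: inc_def)
  have inj: "inj_on (\<lambda>e. f ` e) (inc E v)"
    using inj_on_subset[OF inj_on_image_edges[OF assms(1,2)] sub] .
  have "deg ((\<lambda>e. f ` e) ` E) (f v) = card ((\<lambda>e. f ` e) ` inc E v)"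
    unfolding deg_def inc_image[OF assms] by (rule refl)
  also have "\<dots> = card (inc E v)" by (rule card_image[OF inj])
  finally show ?thesis by (simp add: deg_def)
qed

lemma nice_image:
  assumes "inj_on f V" "edges_in V E" "nice E"
  shows "nice ((\<lambda>e. f ` e) ` E)"
  unfolding nice_def isolated_edges_def
proof (rule ccontr)
  assume "{e \<in> (\<lambda>e. f ` e) ` E. \<forall>v\<in>e. deg ((\<lambda>e. f ` e) ` E) v = 1} \<noteq> {}"
  then obtain e where e: "e \<in> E" "\<forall>v\<in>f ` e. deg ((\<lambda>e. f ` e) ` E) v = 1" by blast
  have "e \<subseteq> V" using edges_in_sub[OF assms(2) e(1)] .
  then have "\<forall>v\<in>e. deg E v = 1" using e(2) deg_image[OF assms(1,2)] by (metis image_eqI subsetD)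
  then have "e \<in> isolated_edges E" using e(1) by (simp add: isolated_edges_def)
  then show False using assms(3) by (simp add: nice_def)
qed

lemma simple_image:
  assumes "ord_inj V f" "edges_in V E" "\<forall>v\<in>V. f v \<in> {1..m}"
  shows "simple_graph m ((\<lambda>e. f ` e) ` E)"
  unfolding simple_graph_def
proof
  fix e'' assume "e'' \<in> (\<lambda>e. f ` e) ` E"
  then obtain e where e: "e \<in> E" "e'' = f ` e" by blast
  obtain x y where xy: "e = {x,y}" "x \<noteq> y" "x \<in> V" "y \<in> V" using assms(2) e(1) unfolding edges_in_def by blast
  have "f x \<noteq> f y" using ord_inj_inj[OF assms(1)] xy(2-4) by (auto dest: inj_onD)
  moreover have "e'' = {f x, f y}" using e(2) xy(1) by simp
  ultimately show "\<exists>i j. e'' = {i, j} \<and> i \<noteq> j \<and> i \<in> {1..m} \<and> j \<in> {1..m}"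
    using assms(3) xy(3,4) by blast
qed

lemma reduce_choosable:
  assumes "finite V" "card V < n" "edges_in V E" "nice E"
    and H: "\<forall>m<n. \<forall>E'. simple_graph m E' \<and> nice E' \<longrightarrow> alg_1_choosable b E'"
  shows "alg_1_choosable b E"
proof -
  let ?f = "rankf V"
  have o: "ord_inj V ?f" by (rule rankf_ord[OF assms(1)])
  have fE: "finite E"
  proof -
    have "E \<subseteq> Pow V" using assms(3) unfolding edges_in_def by auto
    then show ?thesis using assms(1) finite_subset by blast
  qed
  have "simple_graph (card V) ((\<lambda>e. ?f ` e) ` E)"
    by (rule simple_image[OF o assms(3)]) (use rankf_range[OF assms(1)] in blast)
  moreover have "nice ((\<lambda>e. ?f ` e) ` E)"
    by (rule nice_image[OF ord_inj_inj[OF o] assms(3,4)])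
  ultimately have "alg_1_choosable b ((\<lambda>e. ?f ` e) ` E)" using H assms(2) by blast
  then show ?thesis by (rule choosable_relabel[OF o assms(3) fE])
qed


lemma inc_union:
  assumes "twoset E" "f \<in> E"
  shows "inc E (Min f) \<union> inc E (Max f) = {g \<in> E. g \<inter> f \<noteq> {}}"
proof -
  have f: "f = {Min f, Max f}" by (rule twoset_Min_Max(4)[OF assms])
  show ?thesis
  proof (rule set_eqI)
    fix g
    show "g \<in> inc E (Min f) \<union> inc E (Max f) \<longleftrightarrow> g \<in> {g \<in> E. g \<inter> f \<noteq> {}}"
      by (subst (2) f) (auto simp: inc_def)
  qed
qed

lemma omega_monomial_exp:
  assumes "finite E"
  shows "omega w (monomial_exp E K) = (\<Sum>e\<in>E. w e * K e)"
  by (simp add: monomial_exp_def omega_sum)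

lemma leaf:
  fixes w :: "nat set \<Rightarrow> nat" and W :: nat and K :: "nat set \<Rightarrow> nat"
  assumes fin: "finite E" and two: "twoset E" and FE: "F \<subseteq> E"
    and ch: "alg_1_choosable 5 (E - F)"
    and wE': "\<forall>g\<in>E - F. w g = W"
    and wcross: "\<forall>e\<in>E - F. \<forall>g\<in>F. g \<inter> e \<noteq> {} \<longrightarrow> w g > W"
    and hF: "\<forall>f\<in>F. h f \<in> E \<and> h f \<inter> f \<noteq> {} \<and> h f \<noteq> f"
    and wF: "\<forall>f\<in>F. \<forall>g\<in>E. g \<inter> f \<noteq> {} \<longrightarrow> g \<noteq> f \<longrightarrow> g \<noteq> h f \<longrightarrow> w g > w (h f)"
    and KF: "(\<Sum>f\<in>F. Poly_Mapping.single f (K f)) = (\<Sum>f\<in>F. Poly_Mapping.single (h f) (1::nat))"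
    and Kb: "\<forall>f\<in>F. K f \<le> 4" and Ks: "(\<Sum>f\<in>F. K f) = card F"
  shows "alg_1_choosable 5 E"
proof -
  obtain K' where K': "(\<Sum>e\<in>E - F. K' e) = card (E - F)" "\<forall>e\<in>E - F. K' e \<le> 5 - 1"
    "Poly_Mapping.lookup (graph_poly (E - F)) (monomial_exp (E - F) K') \<noteq> 0"
    using ch unfolding alg_1_choosable_def by blast
  have fF: "finite F" using fin FE finite_subset by blast
  have EF: "E - (E - F) = F" using FE by blast
  have sub: "E - F \<subseteq> E" by blast
  have mu: "omega w (monomial_exp (E - F) K') = W * card (E - F)"
    using fin by (simp add: omega_monomial_exp wE' K'(1)[symmetric] sum_distrib_left)
  have ext: "Poly_Mapping.lookup (graph_poly E)
      (monomial_exp (E - F) K' + (\<Sum>f\<in>F. Poly_Mapping.single (h f) 1)) \<noteq> 0"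
  proof -
    have "Poly_Mapping.lookup (graph_poly E)
      (monomial_exp (E - F) K' + (\<Sum>f\<in>E - (E - F). Poly_Mapping.single (h f) 1)) \<noteq> 0"
    proof (rule extension[OF fin sub two wE' _ _ _ mu K'(3)])
      show "\<forall>e\<in>E - F. \<forall>g\<in>E - (E - F). g \<inter> e \<noteq> {} \<longrightarrow> W < w g"
        using wcross EF by simp
      show "\<forall>f\<in>E - (E - F). h f \<in> inc E (Min f) \<union> inc E (Max f) - {f}"
      proof
        fix f assume "f \<in> E - (E - F)"
        then have f: "f \<in> F" "f \<in> E" using FE by auto
        have "h f \<in> {g \<in> E. g \<inter> f \<noteq> {}}" "h f \<noteq> f" using hF f(1) by auto
        then show "h f \<in> inc E (Min f) \<union> inc E (Max f) - {f}"
          unfolding inc_union[OF two f(2)] by blast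
      qed
      show "\<forall>f\<in>E - (E - F). \<forall>g\<in>inc E (Min f) \<union> inc E (Max f) - {f, h f}. w (h f) < w g"
      proof (intro ballI)
        fix f g assume f: "f \<in> E - (E - F)" and g: "g \<in> inc E (Min f) \<union> inc E (Max f) - {f, h f}"
        have fF': "f \<in> F" "f \<in> E" using f FE by auto
        have "g \<in> E" "g \<inter> f \<noteq> {}" "g \<noteq> f" "g \<noteq> h f"
          using g inc_union[OF two fF'(2)] by auto
        then show "w (h f) < w g" using wF fF'(1) by blast
      qed
    qed
    then show ?thesis using EF by simp
  qed
  define K'' where "K'' e = (if e \<in> F then K e else K' e)" for e
  have me: "monomial_exp E K'' = monomial_exp (E - F) K' + (\<Sum>f\<in>F. Poly_Mapping.single f (K f))"
  proof -
    have "monomial_exp E K'' = (\<Sum>e\<in>E - F. Poly_Mapping.single e (K'' e)) + (\<Sum>e\<in>F. Poly_Mapping.single e (K'' e))"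
      unfolding monomial_exp_def using sum.subset_diff[OF FE fin] by simp
    then show ?thesis by (simp add: K''_def monomial_exp_def)
  qed
  have s: "(\<Sum>e\<in>E. K'' e) = card E"
  proof -
    have "(\<Sum>e\<in>E. K'' e) = (\<Sum>e\<in>E - F. K'' e) + (\<Sum>e\<in>F. K'' e)"
      using sum.subset_diff[OF FE fin] by simp
    also have "\<dots> = card (E - F) + card F"
      using K'(1) Ks by (simp add: K''_def)
    also have "\<dots> = card E" using card_Diff_subset[OF fF FE] card_mono[OF fin FE] by simp
    finally show ?thesis .
  qed
  have b: "\<forall>e\<in>E. K'' e \<le> 5 - 1" using Kb K'(2) by (simp add: K''_def)
  show ?thesis
    unfolding alg_1_choosable_def
  proof (intro exI conjI)
    show "(\<Sum>e\<in>E. K'' e) = card E" by (rule s)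
    show "\<forall>e\<in>E. K'' e \<le> 5 - 1" by (rule b)
    show "Poly_Mapping.lookup (graph_poly E) (monomial_exp E K'') \<noteq> 0"
      unfolding me KF by (rule ext)
  qed
qed


lemma simple_twoset: "simple_graph n E \<Longrightarrow> twoset E"
  unfolding simple_graph_def twoset_def by blast

lemma simple_edges_in: "simple_graph n E \<Longrightarrow> edges_in {1..n} E"
  unfolding simple_graph_def edges_in_def by blast

lemma simple_finite: assumes "simple_graph n E" shows "finite E"
proof -
  have "E \<subseteq> Pow {1..n}" using assms unfolding simple_graph_def by auto
  then show ?thesis using finite_subset by blast
qed

lemma twoset_sub: "twoset E \<Longrightarrow> F \<subseteq> E \<Longrightarrow> twoset F"
  unfolding twoset_def by blast

lemma nbrs_sym: "u \<in> nbrs E v \<longleftrightarrow> v \<in> nbrs E u"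
  by (simp add: nbrs_def insert_commute)

lemma nbrs_irrefl: "twoset E \<Longrightarrow> v \<notin> nbrs E v"
proof
  assume "twoset E" "v \<in> nbrs E v"
  then have "{v} \<in> E" by (simp add: nbrs_def)
  then obtain x y where "{v} = {x,y}" "x \<noteq> y" using \<open>twoset E\<close> unfolding twoset_def by blast
  then have "x = v" "y = v" by (metis insertI1 insert_commute singletonD)+
  then show False using \<open>x \<noteq> y\<close> by simp
qed

lemma nbrs_edge: "u \<in> nbrs E v \<longleftrightarrow> {v,u} \<in> E"
  by (simp add: nbrs_def)

lemma inc_nbrs:
  assumes "twoset E"
  shows "inc E v = (\<lambda>u. {v,u}) ` nbrs E v"
proof (rule set_eqI)
  fix e
  show "e \<in> inc E v \<longleftrightarrow> e \<in> (\<lambda>u. {v,u}) ` nbrs E v"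
  proof
    assume "e \<in> inc E v"
    then have e: "e \<in> E" "v \<in> e" by (auto simp: inc_def)
    obtain x y where xy: "e = {x,y}" "x \<noteq> y" using assms e(1) unfolding twoset_def by blast
    show "e \<in> (\<lambda>u. {v,u}) ` nbrs E v"
    proof (cases "v = x")
      case True
      then have "e = {v,y}" "y \<in> nbrs E v" using xy e by (auto simp: nbrs_def)
      then show ?thesis by blast
    next
      case False
      then have "v = y" using xy e by auto
      then have "e = {v,x}" "x \<in> nbrs E v" using xy e by (auto simp: nbrs_def insert_commute)
      then show ?thesis by blast
    qed
  next
    assume "e \<in> (\<lambda>u. {v,u}) ` nbrs E v"
    then show "e \<in> inc E v" by (auto simp: inc_def nbrs_def)
  qed
qed

lemma deg_nbrs:
  assumes "twoset E"
  shows "deg E v = card (nbrs E v)"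
proof -
  have "inj_on (\<lambda>u. {v,u}) (nbrs E v)"
  proof (rule inj_onI)
    fix a b assume ab: "a \<in> nbrs E v" "b \<in> nbrs E v" "{v,a} = {v,b}"
    have "a \<noteq> v" "b \<noteq> v" using ab(1,2) nbrs_irrefl[OF assms] by auto
    then show "a = b" using ab(3) by (metis doubleton_eq_iff)
  qed
  then show ?thesis unfolding deg_def inc_nbrs[OF assms] by (rule card_image)
qed

lemma nbrs_filter: "nbrs {e\<in>E. P e} v = {u \<in> nbrs E v. P {v,u}}"
  by (auto simp: nbrs_def)

lemma finite_nbrs:
  assumes "finite E" "twoset E" shows "finite (nbrs E v)"
proof -
  have "nbrs E v \<subseteq> \<Union> E" by (auto simp: nbrs_def)
  moreover have "\<forall>g\<in>E. finite g" using assms(2) unfolding twoset_def by auto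
  then have "finite (\<Union> E)" using assms(1) by (intro finite_Union) auto
  ultimately show ?thesis by (rule finite_subset)
qed

lemma card1_iff: "z \<in> A \<Longrightarrow> card A = 1 \<longleftrightarrow> A = {z}"
  by (metis card_1_singletonE card.empty card_insert_disjoint empty_iff finite.emptyI singletonD One_nat_def)

lemma iso_char:
  assumes "twoset F" "finite F" "y \<noteq> z"
  shows "{y,z} \<in> isolated_edges F \<longleftrightarrow> {y,z} \<in> F \<and> nbrs F y = {z} \<and> nbrs F z = {y}"
proof -
  have a: "{y,z} \<in> F \<Longrightarrow> z \<in> nbrs F y" "{y,z} \<in> F \<Longrightarrow> y \<in> nbrs F z"
    by (simp_all add: nbrs_def insert_commute)
  have "{y,z} \<in> isolated_edges F \<longleftrightarrow> {y,z} \<in> F \<and> card (nbrs F y) = 1 \<and> card (nbrs F z) = 1"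
    unfolding isolated_edges_def deg_nbrs[OF assms(1)] by auto
  also have "\<dots> \<longleftrightarrow> {y,z} \<in> F \<and> nbrs F y = {z} \<and> nbrs F z = {y}"
    using card1_iff[OF a(1)] card1_iff[OF a(2)] by auto
  finally show ?thesis .
qed

lemma iso_obtain:
  assumes "e \<in> isolated_edges F" "twoset F" "finite F"
  obtains y z where "y \<noteq> z" "e = {y,z}" "{y,z} \<in> F" "nbrs F y = {z}" "nbrs F z = {y}"
proof -
  have "e \<in> F" using assms(1) by (simp add: isolated_edges_def)
  then obtain y z where yz: "e = {y,z}" "y \<noteq> z" using assms(2) unfolding twoset_def by blast
  then show ?thesis using that assms iso_char[OF assms(2,3) yz(2)] by auto
qed

lemma nbrs_E3: assumes "twoset E"
  shows "nbrs (E3 E J) v = (if v \<in> J then nbrs E v - J else nbrs E v \<inter> J)"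
proof -
  have "card ({v,u} \<inter> J) = 1 \<longleftrightarrow> (if v \<in> J then u \<notin> J else u \<in> J)" if "u \<in> nbrs E v" for u
  proof -
    have uv: "u \<noteq> v" using that nbrs_irrefl[OF assms] by auto
    show ?thesis
    proof (cases "v \<in> J"; cases "u \<in> J")
      assume "v \<in> J" "u \<in> J"
      then have "{v,u} \<inter> J = {v,u}" by auto
      then show ?thesis using uv \<open>v \<in> J\<close> \<open>u \<in> J\<close> by simp
    next
      assume "v \<in> J" "u \<notin> J"
      then have "{v,u} \<inter> J = {v}" by auto
      then show ?thesis using \<open>v \<in> J\<close> \<open>u \<notin> J\<close> by simp
    next
      assume "v \<notin> J" "u \<in> J"
      then have "{v,u} \<inter> J = {u}" by auto
      then show ?thesis using \<open>v \<notin> J\<close> \<open>u \<in> J\<close> by simp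
    next
      assume "v \<notin> J" "u \<notin> J"
      then have "{v,u} \<inter> J = {}" by auto
      then show ?thesis using \<open>v \<notin> J\<close> \<open>u \<notin> J\<close> by simp
    qed
  qed
  then have "nbrs (E3 E J) v = {u \<in> nbrs E v. if v \<in> J then u \<notin> J else u \<in> J}"
    unfolding E3_def nbrs_filter by blast
  then show ?thesis by auto
qed

lemma nbrs_E4: "nbrs (E4 E J) v = (if v \<in> J then nbrs E v \<inter> J else {})"
  unfolding E4_def nbrs_filter by auto

lemma nbrs_del: "nbrs {e\<in>E. e \<inter> X = {}} v = (if v \<in> X then {} else nbrs E v - X)"
  unfolding nbrs_filter by auto


locale LM =
  fixes n :: nat and E :: "nat set set" and J :: "nat set" and i i' :: nat
  assumes simple: "simple_graph n E"
    and niceE: "nice E"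
    and notch: "\<not> alg_1_choosable 5 E"
    and H: "\<forall>m < n. \<forall>E'. simple_graph m E' \<and> nice E' \<longrightarrow> alg_1_choosable 5 E'"
    and good: "good_subset {1..n} E J"
    and minJ: "\<forall>J'. good_subset {1..n} E J' \<longrightarrow> card J \<le> card J'"
    and e2: "{i, i'} \<in> E2 E J"
    and d3: "deg (E3 E J) i \<ge> 2"
begin

abbreviation "V \<equiv> {1..n}"
abbreviation "N v \<equiv> nbrs E v"

lemma tw: "twoset E" using simple_twoset[OF simple] .
lemma fin: "finite E" using simple_finite[OF simple] .
lemma ein: "edges_in V E" using simple_edges_in[OF simple] .

lemma sub_tw: "F \<subseteq> E \<Longrightarrow> twoset F" using twoset_sub[OF tw] .
lemma sub_fin: "F \<subseteq> E \<Longrightarrow> finite F" using fin finite_subset by blast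

lemma NV: assumes "u \<in> N v" shows "u \<in> V" "v \<in> V"
proof -
  have "{v,u} \<in> E" using assms by (simp add: nbrs_def)
  then obtain x y where "{v,u} = {x,y}" "x \<in> V" "y \<in> V" using ein unfolding edges_in_def by blast
  then show "u \<in> V" "v \<in> V" by (metis doubleton_eq_iff)+
qed

lemma Nirr: "v \<notin> N v" using nbrs_irrefl[OF tw] .

lemma edge_N: "{a,b} \<in> E \<longleftrightarrow> b \<in> N a" by (simp add: nbrs_def)

lemma JV: "J \<subseteq> V" using good by (simp add: good_subset_def)
lemma finJ: "finite J" using JV finite_subset by blast

lemma gJ2: "nice (E3 E J)" using good by (simp add: good_subset_def)
lemma gJ5: "\<forall>e\<in>E2 E J. \<forall>v\<in>e. \<exists>j\<in>J. {v,j} \<in> E" using good by (simp add: good_subset_def)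
lemma gJ4: "\<exists>ie. inj_on ie (E4 E J) \<and> (\<forall>e\<in>E4 E J. ie e \<in> V - J \<and> e \<subseteq> nbrs (E3 E J) (ie e) \<and>
                     (\<forall>j\<in>e. \<not> has_private V E J j))" using good by (simp add: good_subset_def)
lemma gJ3: "\<forall>j\<in>J. card {i. private_nbr V E J i j} \<le> 1" using good by (simp add: good_subset_def)
lemma gJ1: "\<forall>v\<in>J. deg (E4 E J) v \<le> 1" using good by (simp add: good_subset_def)
lemma gJ0: "J \<noteq> {}" using good by (simp add: good_subset_def)

lemma E3_nbrs: "nbrs (E3 E J) v = (if v \<in> J then N v - J else N v \<inter> J)"
  using nbrs_E3[OF tw] .

lemma E3sub: "E3 E J \<subseteq> E" by (auto simp: E3_def)
lemma E4sub: "E4 E J \<subseteq> E" by (auto simp: E4_def)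

lemma J2': assumes "nbrs (E3 E J) a = {b}" "nbrs (E3 E J) b = {a}" shows False
proof -
  have ab: "a \<noteq> b" using assms(1) nbrs_irrefl[OF sub_tw[OF E3sub]] by auto
  have "{a,b} \<in> E3 E J" using assms(1) by (auto simp: nbrs_def)
  then have "{a,b} \<in> isolated_edges (E3 E J)"
    using iso_char[OF sub_tw[OF E3sub] sub_fin[OF E3sub] ab] assms by simp
  then show False using gJ2 by (simp add: nice_def)
qed

lemma J5': assumes "{y,z} \<in> E" "y \<notin> J" "z \<notin> J" "N y - J = {z}" "N z - J = {y}"
  shows "N y \<inter> J \<noteq> {}"
proof -
  let ?F = "{e\<in>E. e \<inter> J = {}}"
  have Fs: "?F \<subseteq> E" by auto
  have yz: "y \<noteq> z" using assms(4) Nirr by auto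
  have "{y,z} \<in> ?F" using assms(1-3) by auto
  moreover have "nbrs ?F y = {z}" "nbrs ?F z = {y}" using assms(2-5) by (simp_all add: nbrs_del)
  ultimately have "{y,z} \<in> E2 E J"
    unfolding E2_def using iso_char[OF sub_tw[OF Fs] sub_fin[OF Fs] yz] by simp
  then obtain j where "j \<in> J" "{y,j} \<in> E" using gJ5 by blast
  then show ?thesis by (auto simp: nbrs_def)
qed

lemma J4': assumes "a \<in> J" "b \<in> J" "{a,b} \<in> E"
  shows "\<exists>c. c \<in> V - J \<and> a \<in> N c \<and> b \<in> N c \<and> \<not> has_private V E J a \<and> \<not> has_private V E J b"
proof -
  obtain ie where ie: "\<forall>e\<in>E4 E J. ie e \<in> V - J \<and> e \<subseteq> nbrs (E3 E J) (ie e) \<and> (\<forall>j\<in>e. \<not> has_private V E J j)"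
    using gJ4 by blast
  have "{a,b} \<in> E4 E J" using assms by (simp add: E4_def)
  then have "ie {a,b} \<in> V - J" "{a,b} \<subseteq> nbrs (E3 E J) (ie {a,b})"
    "\<not> has_private V E J a" "\<not> has_private V E J b" using ie by auto
  then show ?thesis using E3_nbrs[of "ie {a,b}"] by (intro exI[of _ "ie {a,b}"]) auto
qed

lemma J3': assumes "j \<in> J" "private_nbr V E J v j" "private_nbr V E J v' j" shows "v = v'"
proof -
  have c: "card {x. private_nbr V E J x j} \<le> 1" using gJ3 assms(1) by blast
  have "{x. private_nbr V E J x j} \<subseteq> V" by (auto simp: private_nbr_def)
  then have f: "finite {x. private_nbr V E J x j}" using finite_subset by blast
  show ?thesis
  proof (rule ccontr)
    assume "v \<noteq> v'"
    then have "{v,v'} \<subseteq> {x. private_nbr V E J x j}" using assms by auto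
    then have "card {v,v'} \<le> card {x. private_nbr V E J x j}" using f by (rule card_mono[rotated])
    then show False using c \<open>v \<noteq> v'\<close> by simp
  qed
qed

lemma e2_facts: "i \<notin> J" "i' \<notin> J" "{i,i'} \<in> E" "i \<noteq> i'" "N i - J = {i'}" "N i' - J = {i}"
proof -
  let ?F = "{e\<in>E. e \<inter> J = {}}"
  have Fs: "?F \<subseteq> E" by auto
  have iso: "{i,i'} \<in> isolated_edges ?F" using e2 by (simp add: E2_def)
  then have "{i,i'} \<in> ?F" by (simp add: isolated_edges_def)
  then show a: "i \<notin> J" "i' \<notin> J" "{i,i'} \<in> E" by auto
  show b: "i \<noteq> i'" using a(3) Nirr by (auto simp: nbrs_def)
  have "nbrs ?F i = {i'}" "nbrs ?F i' = {i}"
    using iso iso_char[OF sub_tw[OF Fs] sub_fin[OF Fs] b] by auto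
  then show "N i - J = {i'}" "N i' - J = {i}" using a by (simp_all add: nbrs_del)
qed

lemma cardNJ: "card (N i \<inter> J) \<ge> 2"
  using d3 deg_nbrs[OF sub_tw[OF E3sub], of i] E3_nbrs[of i] e2_facts(1) by simp

lemma special_facts:
  assumes sp: "special_nbr V E J s i"
  shows "s \<in> J" "{i,s} \<in> E" "\<exists>p. p \<in> V \<and> p \<notin> J \<and> p \<noteq> i \<and> N s = {i,p} \<and> N p \<inter> J = {s}"
proof -
  have s1: "{i,s} \<in> E3 E J" "s \<in> J" "has_private V E J s" "nonprivate_nbrs V E J s = {i}"
    using sp by (auto simp: special_nbr_def)
  show "s \<in> J" using s1 by simp
  show "{i,s} \<in> E" using s1 E3sub by auto
  obtain p where p: "private_nbr V E J p s" using s1(3) by (auto simp: has_private_def)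
  have pV: "p \<in> V" "p \<notin> J" "nbrs (E3 E J) p = {s}" using p by (auto simp: private_nbr_def)
  have NpJ: "N p \<inter> J = {s}" using pV E3_nbrs[of p] by simp
  have inp: "i \<in> nbrs (E3 E J) s" "\<not> private_nbr V E J i s"
    using s1(4) by (auto simp: nonprivate_nbrs_def)
  have pi: "p \<noteq> i" using inp(2) p by auto
  have NsJ: "N s \<inter> J = {}"
  proof (rule ccontr)
    assume "N s \<inter> J \<noteq> {}"
    then obtain u where u: "u \<in> N s" "u \<in> J" by blast
    then obtain c where "\<not> has_private V E J s" using J4'[OF s1(2) u(2)] by (auto simp: nbrs_def)
    then show False using s1(3) by simp
  qed
  have "N s = {i,p}"
  proof
    show "N s \<subseteq> {i,p}"
    proof
      fix u assume u: "u \<in> N s"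
      then have "u \<notin> J" using NsJ by auto
      then have uE3: "u \<in> nbrs (E3 E J) s" using u E3_nbrs[of s] s1(2) by simp
      show "u \<in> {i,p}"
      proof (cases "private_nbr V E J u s")
        case True
        have "u = p" by (rule J3'[OF s1(2) True p])
        then show ?thesis by simp
      next
        case False
        then have "u \<in> nonprivate_nbrs V E J s" using uE3 by (simp add: nonprivate_nbrs_def)
        then show ?thesis using s1(4) by simp
      qed
    qed
    show "{i,p} \<subseteq> N s"
    proof -
      have "i \<in> N s" using inp(1) E3_nbrs[of s] s1(2) by simp
      moreover have "s \<in> N p" using NpJ by auto
      then have "p \<in> N s" by (simp add: nbrs_sym)
      ultimately show ?thesis by simp
    qed
  qed
  then show "\<exists>p. p \<in> V \<and> p \<notin> J \<and> p \<noteq> i \<and> N s = {i,p} \<and> N p \<inter> J = {s}"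
    using pV(1,2) pi NpJ by blast
qed

end


context LM begin

lemma nbrs4: "nbrs (E4 E K) v = (if v \<in> K then N v \<inter> K else {})"
  using nbrs_E4 .

lemma k3_good:
  assumes sJ: "s \<in> J" and pV: "p \<in> V" and pJ: "p \<notin> J" and pi: "p \<noteq> i"
    and Ns: "N s = {i,p}" and Np: "N p \<inter> J = {s}" and c3: "card (N i \<inter> J) \<ge> 3"
  shows "good_subset V E (J - {s})"
proof -
  define J' where "J' = J - {s}"
  note iJ = e2_facts(1)
  have NsJ: "N s \<inter> J = {}" using Ns iJ pJ by auto
  have sNi: "s \<in> N i" using Ns nbrs_sym by auto
  have finNiJ: "finite (N i \<inter> J)" using finJ by simp
  have c2: "card (N i \<inter> J') \<ge> 2"
  proof -
    have "N i \<inter> J' = (N i \<inter> J) - {s}" by (auto simp: J'_def)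
    then have "card (N i \<inter> J') = card (N i \<inter> J) - 1" using sNi sJ finNiJ by simp
    then show ?thesis using c3 by simp
  qed
  have n3': "nbrs (E3 E J') v = (if v \<in> J' then N v - J' else N v \<inter> J')" for v
    using nbrs_E3[OF tw] .
  have same: "nbrs (E3 E J') v = nbrs (E3 E J) v" if "v \<notin> {s,i,p}" for v
  proof (cases "v \<in> J")
    case True
    then have "v \<in> J'" using that by (auto simp: J'_def)
    have "s \<notin> N v" using that Ns nbrs_sym by auto
    then have "N v - J' = N v - J" by (auto simp: J'_def)
    then show ?thesis using \<open>v \<in> J'\<close> True E3_nbrs n3' by simp
  next
    case False
    then have "v \<notin> J'" by (auto simp: J'_def)
    have "s \<notin> N v" using that Ns nbrs_sym by auto
    then have "N v \<inter> J' = N v \<inter> J" by (auto simp: J'_def)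
    then show ?thesis using \<open>v \<notin> J'\<close> False E3_nbrs n3' by simp
  qed
  have nsing: "nbrs (E3 E J') v \<noteq> {x}" if vin: "v \<in> {s,i,p}" for v x
  proof -
    have "s \<notin> J'" "i \<notin> J'" "p \<notin> J'" using iJ pJ by (auto simp: J'_def)
    consider "v = s" | "v = i" | "v = p" using vin by blast
    then show ?thesis
    proof cases
      case 1
      then show ?thesis using n3' \<open>s \<notin> J'\<close> NsJ by (auto simp: J'_def)
    next
      case 2
      then have "nbrs (E3 E J') v = N i \<inter> J'" using n3' \<open>i \<notin> J'\<close> by simp
      then show ?thesis using c2 by auto
    next
      case 3
      then have "nbrs (E3 E J') v = N p \<inter> J'" using n3' \<open>p \<notin> J'\<close> by simp
      also have "\<dots> = {}" using Np by (auto simp: J'_def)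
      finally show ?thesis by simp
    qed
  qed
  have priv_sub: "private_nbr V E J v j" if "private_nbr V E J' v j" for v j
  proof -
    have v: "v \<in> V" "v \<notin> J'" "nbrs (E3 E J') v = {j}" using that by (auto simp: private_nbr_def)
    have "v \<notin> {s,i,p}" using nsing v(3) by blast
    then have "v \<notin> J" using v(2) by (auto simp: J'_def)
    moreover have "nbrs (E3 E J) v = {j}" using same \<open>v \<notin> {s,i,p}\<close> v(3) by simp
    ultimately show ?thesis using v(1) by (simp add: private_nbr_def)
  qed
  have hp_sub: "has_private V E J j" if "has_private V E J' j" for j
    using that priv_sub by (auto simp: has_private_def)
  have C0: "J' \<subseteq> V" "J' \<noteq> {}"
  proof -
    show "J' \<subseteq> V" using JV by (auto simp: J'_def)
    show "J' \<noteq> {}" using c2 by (metis Int_empty_right card.empty not_numeral_le_zero)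
  qed
  have C1: "\<forall>v\<in>J'. deg (E4 E J') v \<le> 1"
  proof
    fix v assume v: "v \<in> J'"
    then have vJ: "v \<in> J" by (simp add: J'_def)
    have "deg (E4 E J') v = card (N v \<inter> J')"
      using deg_nbrs[OF sub_tw[of "E4 E J'"]] nbrs4[of J' v] v by (simp add: E4_def)
    also have "\<dots> \<le> card (N v \<inter> J)"
      by (rule card_mono) (use finJ in \<open>auto simp: J'_def\<close>)
    also have "\<dots> = deg (E4 E J) v"
      using deg_nbrs[OF sub_tw[OF E4sub]] nbrs4[of J v] vJ by simp
    also have "\<dots> \<le> 1" using gJ1 vJ by blast
    finally show "deg (E4 E J') v \<le> 1" .
  qed
  have C2: "nice (E3 E J')"
  proof (rule ccontr)
    assume "\<not> nice (E3 E J')"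
    then obtain e where "e \<in> isolated_edges (E3 E J')" by (auto simp: nice_def)
    moreover have s3: "E3 E J' \<subseteq> E" by (auto simp: E3_def)
    ultimately obtain y z where yz: "y \<noteq> z" "nbrs (E3 E J') y = {z}" "nbrs (E3 E J') z = {y}"
      using iso_obtain[OF _ sub_tw[OF s3] sub_fin[OF s3]] by metis
    have "y \<notin> {s,i,p}" "z \<notin> {s,i,p}" using nsing yz(2,3) by blast+
    then have "nbrs (E3 E J) y = {z}" "nbrs (E3 E J) z = {y}" using same yz(2,3) by simp_all
    then show False by (rule J2')
  qed
  have C3: "\<forall>j\<in>J'. card {v. private_nbr V E J' v j} \<le> 1"
  proof
    fix j assume j: "j \<in> J'"
    have "{v. private_nbr V E J' v j} \<subseteq> {v. private_nbr V E J v j}" using priv_sub by blast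
    moreover have "finite {v. private_nbr V E J v j}"
      by (rule finite_subset[of _ V]) (auto simp: private_nbr_def)
    ultimately have "card {v. private_nbr V E J' v j} \<le> card {v. private_nbr V E J v j}"
      by (rule card_mono[rotated])
    also have "\<dots> \<le> 1" using gJ3 j by (auto simp: J'_def)
    finally show "card {v. private_nbr V E J' v j} \<le> 1" .
  qed
  have C4: "\<exists>ie. inj_on ie (E4 E J') \<and> (\<forall>e\<in>E4 E J'. ie e \<in> V - J' \<and> e \<subseteq> nbrs (E3 E J') (ie e) \<and>
                     (\<forall>j\<in>e. \<not> has_private V E J' j))"
  proof -
    obtain ie where ie: "inj_on ie (E4 E J)" "\<forall>e\<in>E4 E J. ie e \<in> V - J \<and> e \<subseteq> nbrs (E3 E J) (ie e) \<and>
                     (\<forall>j\<in>e. \<not> has_private V E J j)" using gJ4 by blast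
    have sub4: "E4 E J' \<subseteq> E4 E J" by (auto simp: E4_def J'_def)
    show ?thesis
    proof (intro exI conjI ballI)
      show "inj_on ie (E4 E J')" using inj_on_subset[OF ie(1) sub4] .
    next
      fix e assume e: "e \<in> E4 E J'"
      then have e4: "e \<in> E4 E J" "e \<subseteq> J'" using sub4 by (auto simp: E4_def)
      have a: "ie e \<in> V - J" "e \<subseteq> nbrs (E3 E J) (ie e)" "\<forall>j\<in>e. \<not> has_private V E J j" using ie(2) e4(1) by auto
      show "ie e \<in> V - J'" using a(1) by (auto simp: J'_def)
      have "ie e \<notin> J'" using a(1) by (auto simp: J'_def)
      then have "nbrs (E3 E J') (ie e) = N (ie e) \<inter> J'" using n3' by simp
      moreover have "nbrs (E3 E J) (ie e) = N (ie e) \<inter> J" using E3_nbrs a(1) by simp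
      ultimately show "e \<subseteq> nbrs (E3 E J') (ie e)" using a(2) e4(2) by auto
    next
      fix e j assume e: "e \<in> E4 E J'" "j \<in> e"
      then have "\<not> has_private V E J j" using ie(2) sub4 by blast
      then show "\<not> has_private V E J' j" using hp_sub by blast
    qed
  qed
  have C5: "\<forall>e\<in>E2 E J'. \<forall>v\<in>e. \<exists>j\<in>J'. {v,j} \<in> E"
  proof (intro ballI)
    fix e v assume e: "e \<in> E2 E J'" and v: "v \<in> e"
    let ?F = "{e\<in>E. e \<inter> J' = {}}"
    have Fs: "?F \<subseteq> E" by auto
    have e': "e \<in> isolated_edges ?F" using e by (simp add: E2_def)
    obtain y z where yz: "y \<noteq> z" "e = {y,z}" "{y,z} \<in> ?F" "nbrs ?F y = {z}" "nbrs ?F z = {y}"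
      by (rule iso_obtain[OF e' sub_tw[OF Fs] sub_fin[OF Fs]])
    have yzJ': "y \<notin> J'" "z \<notin> J'" "{y,z} \<in> E" using yz(3) by auto
    have Ny: "N y - J' = {z}" and Nz: "N z - J' = {y}" using yz(4,5) yzJ' by (simp_all add: nbrs_del)
    have key: "\<exists>j\<in>J'. {a,j} \<in> E"
      if ab: "a \<noteq> b" "{a,b} \<in> E" "a \<notin> J'" "b \<notin> J'" "N a - J' = {b}" "N b - J' = {a}" for a b
    proof -
      have aS: "a \<noteq> s"
      proof
        assume "a = s"
        then have "i \<in> N a - J'" "p \<in> N a - J'" using Ns iJ pJ by (auto simp: J'_def)
        then show False using ab(5) pi by auto
      qed
      have bS: "b \<noteq> s"
      proof
        assume "b = s"
        then have "i \<in> N b - J'" "p \<in> N b - J'" using Ns iJ pJ by (auto simp: J'_def)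
        then show False using ab(6) pi by auto
      qed
      have aJ: "a \<notin> J" "b \<notin> J" using ab(3,4) aS bS by (auto simp: J'_def)
      have "N a - J = {b}" using ab(5) aJ(2) ab(2) by (auto simp: J'_def nbrs_def)
      moreover have "N b - J = {a}" using ab(6) aJ(1) ab(2) by (auto simp: J'_def nbrs_def insert_commute)
      ultimately have "N a \<inter> J \<noteq> {}" using J5'[OF ab(2) aJ] by blast
      then obtain j where j: "j \<in> N a" "j \<in> J" by blast
      show ?thesis
      proof (cases "j = s")
        case False
        then show ?thesis using j by (auto simp: J'_def nbrs_def)
      next
        case True
        then have "a = i \<or> a = p" using j(1) Ns nbrs_sym by auto
        then show ?thesis
        proof
          assume "a = i"
          then have "{i', s} \<subseteq> N a - J'" using e2_facts sNi iJ by (auto simp: J'_def)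
          moreover have "i' \<noteq> s" using e2_facts(2) sJ by auto
          ultimately show ?thesis using ab(5) by auto
        next
          assume "a = p"
          then have "s \<in> N a - J'" using Np by (auto simp: J'_def)
          then show ?thesis using ab(5) bS by auto
        qed
      qed
    qed
    have zy: "{z,y} \<in> E" using yzJ'(3) by (simp add: insert_commute)
    have zy': "z \<noteq> y" using yz(1) by simp
    have ky: "\<exists>j\<in>J'. {y,j} \<in> E" by (rule key[OF yz(1) yzJ'(3) yzJ'(1,2) Ny Nz])
    have kz: "\<exists>j\<in>J'. {z,j} \<in> E" by (rule key[OF zy' zy yzJ'(2,1) Nz Ny])
    have "v = y \<or> v = z" using v yz(2) by simp
    then show "\<exists>j\<in>J'. {v,j} \<in> E" using ky kz by (elim disjE) simp_all
  qed
  have "good_subset V E J'" unfolding good_subset_def by (intro conjI C0 C1 C2 C3 C4 C5)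
  then show ?thesis by (simp add: J'_def)
qed

end


locale LM2 = LM +
  fixes s p t :: nat
  assumes sJ: "s \<in> J" and tJ: "t \<in> J" and st: "s \<noteq> t"
    and pV: "p \<in> V" and pJ: "p \<notin> J" and pi: "p \<noteq> i"
    and Ns: "N s = {i,p}" and NpJ: "N p \<inter> J = {s}" and NiJ2: "N i \<inter> J = {s,t}"
begin

lemma iJ: "i \<notin> J" using e2_facts(1) .
lemma i'J: "i' \<notin> J" using e2_facts(2) .
lemma Ni'J: "N i' - J = {i}" using e2_facts(6) .

lemma Ni: "N i = {s,t,i'}"
proof -
  have "N i = (N i \<inter> J) \<union> (N i - J)" by blast
  then show ?thesis using NiJ2 e2_facts(5) by auto
qed

lemma NsJ: "N s \<inter> J = {}" using Ns iJ pJ by auto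

lemma inN_s: "u \<in> N s \<longleftrightarrow> u = i \<or> u = p" using Ns by auto
lemma s_inN: "s \<in> N u \<longleftrightarrow> u = i \<or> u = p" using Ns nbrs_sym by auto
lemma i_inN: "i \<in> N u \<longleftrightarrow> u = s \<or> u = t \<or> u = i'" using Ni nbrs_sym by auto

lemma core1:
  assumes ab: "a \<noteq> b" "{a,b} \<in> E" "a \<notin> {s,i}" "b \<notin> {s,i}" "N a - {s,i} = {b}" "N b - {s,i} = {a}"
    and na: "N a \<noteq> {b}"
  shows "\<exists>w. N t = {i,w} \<and> w \<notin> J \<and> w \<noteq> s \<and> w \<noteq> i \<and> ((w = i' \<and> N i' \<subseteq> {s,i,t}) \<or> N w = {t})"
proof -
  have bNa: "b \<in> N a" and aNb: "a \<in> N b" using ab(5,6) by auto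
  have "N a \<inter> {s,i} \<noteq> {}" using ab(5) na by auto
  then have "s \<in> N a \<or> i \<in> N a" by auto
  then have aX: "a = p \<or> a = t \<or> a = i'" using s_inN i_inN ab(3) by auto
  show ?thesis
  proof (cases "a = i'")
    case True
    have bJ: "b \<in> J"
    proof (rule ccontr)
      assume "b \<notin> J"
      then have "b \<in> N i' - J" using bNa True by simp
      then show False using Ni'J ab(4) by auto
    qed
    have bs: "s \<notin> N b" using bJ s_inN pJ iJ by auto
    show ?thesis
    proof (cases "b = t")
      case False
      have bi: "i \<notin> N b" using i_inN False bJ i'J ab(4) by auto
      have Nb: "N b = {a}" using ab(6) bs bi by auto
      have n3b: "nbrs (E3 E J) b = {i'}" using E3_nbrs[of b] bJ Nb True i'J by auto
      have "N i' \<subseteq> {s,i,b}" using ab(5) True by auto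
      then have sub: "N i' \<inter> J \<subseteq> {s,b}" using iJ by auto
      have "b \<in> N i' \<inter> J" using bNa bJ True by simp
      show ?thesis
      proof (cases "s \<in> N i'")
        case True
        then have "i' = p" using s_inN e2_facts(4) by auto
        then show ?thesis using NpJ \<open>b \<in> N i' \<inter> J\<close> ab(4) by auto
      next
        case False
        then have "N i' \<inter> J = {b}" using sub \<open>b \<in> N i' \<inter> J\<close> by auto
        then have "nbrs (E3 E J) i' = {b}" using E3_nbrs[of i'] i'J by simp
        then show ?thesis using J2'[OF n3b] by simp
      qed
    next
      case bt: True
      have "N t = {i,i'}"
      proof -
        have "N t - {s,i} = {i'}" using ab(6) bt True by simp
        moreover have "s \<notin> N t" using bs bt by simp
        moreover have "i \<in> N t" using i_inN by simp
        ultimately show ?thesis by auto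
      qed
      moreover have "N i' \<subseteq> {s,i,t}" using ab(5) True bt by auto
      ultimately show ?thesis using i'J e2_facts(4) sJ by (intro exI[of _ i']) auto
    qed
  next
    case ni': False
    show ?thesis
    proof (cases "a = p")
      case True
      have bJ: "b \<notin> J" using NpJ bNa True ab(4) by auto
      have bs: "s \<notin> N b" using s_inN True ab(1) ab(4) by auto
      have bi: "i \<notin> N b"
      proof
        assume "i \<in> N b"
        then have "b = i'" using i_inN bJ sJ tJ by auto
        then have "p \<in> N i' - J" using aNb True pJ by simp
        then show False using Ni'J pi by auto
      qed
      have Nb: "N b = {p}" using ab(6) bs bi True by auto
      have "i \<notin> N p" using i_inN True ni' sJ tJ pJ by auto
      then have Np: "N p - J = {b}" using ab(5) True bJ sJ by auto
      have "N b - J = {p}" using Nb pJ by auto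
      then have "N b \<inter> J \<noteq> {}" using J5'[of b p] ab(2) bJ pJ Np True by (simp add: insert_commute)
      then show ?thesis using Nb pJ by auto
    next
      case np: False
      then have at: "a = t" using aX ni' by simp
      have st': "s \<notin> N t" using tJ s_inN pJ iJ by auto
      have it: "i \<in> N t" using i_inN by simp
      have Nt: "N t = {i,b}" using ab(5) at st' it by auto
      have bJ: "b \<notin> J"
      proof
        assume bJ: "b \<in> J"
        obtain c where c: "c \<in> V - J" "t \<in> N c" "b \<in> N c" using J4'[OF tJ bJ] ab(2) at by blast
        have "c \<in> N t" using c(2) nbrs_sym by auto
        then have "c = i" using Nt c(1) bJ by auto
        then have "b \<in> N i \<inter> J" using c(3) nbrs_sym bJ by auto
        then show False using NiJ2 ab(4) bNa at Nirr by auto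
      qed
      have bs: "b \<noteq> s" "b \<noteq> i" using ab(4) by auto
      show ?thesis
      proof (cases "i \<in> N b")
        case True
        then have "b = i'" using i_inN bJ sJ tJ by auto
        moreover have "N i' \<subseteq> {s,i,t}" using ab(6) at \<open>b = i'\<close> by auto
        ultimately show ?thesis using Nt bJ bs by (intro exI[of _ b]) auto
      next
        case False
        have "s \<notin> N b"
        proof
          assume "s \<in> N b"
          then have "b = p" using s_inN bs by auto
          then have "t \<in> N p \<inter> J" using aNb at tJ by simp
          then show False using NpJ st by auto
        qed
        then have "N b = {t}" using ab(6) False at by auto
        then show ?thesis using Nt bJ bs by (intro exI[of _ b]) auto
      qed
    qed
  qed
qed

lemma del_iso:
  assumes "\<not> nice {e\<in>E. e \<inter> X = {}}"
  obtains a b where "a \<noteq> b" "{a,b} \<in> E" "a \<notin> X" "b \<notin> X" "N a - X = {b}" "N b - X = {a}" "N a \<noteq> {b}"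
proof -
  let ?F = "{e\<in>E. e \<inter> X = {}}"
  have Fs: "?F \<subseteq> E" by auto
  obtain e where "e \<in> isolated_edges ?F" using assms by (auto simp: nice_def)
  then obtain y z where yz: "y \<noteq> z" "e = {y,z}" "{y,z} \<in> ?F" "nbrs ?F y = {z}" "nbrs ?F z = {y}"
    by (rule iso_obtain[OF _ sub_tw[OF Fs] sub_fin[OF Fs]])
  have yzX: "y \<notin> X" "z \<notin> X" "{y,z} \<in> E" using yz(3) by auto
  have Ny: "N y - X = {z}" "N z - X = {y}" using yz(4,5) yzX by (simp_all add: nbrs_del)
  have "\<not> (N y = {z} \<and> N z = {y})"
  proof
    assume "N y = {z} \<and> N z = {y}"
    then have "{y,z} \<in> isolated_edges E" using iso_char[OF tw fin yz(1)] yzX(3) by simp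
    then show False using niceE by (simp add: nice_def)
  qed
  then show ?thesis
  proof (cases "N y = {z}")
    case False
    then show ?thesis using that yz(1) yzX Ny by blast
  next
    case True
    then have "N z \<noteq> {y}" using \<open>\<not> (N y = {z} \<and> N z = {y})\<close> by simp
    moreover have "{z,y} \<in> E" using yzX(3) by (simp add: insert_commute)
    ultimately show ?thesis using that yz(1) yzX Ny by (metis)
  qed
qed

lemma nice1:
  assumes "\<not> nice {e\<in>E. e \<inter> {s,i} = {}}"
  shows "\<exists>w. N t = {i,w} \<and> w \<notin> J \<and> w \<noteq> s \<and> w \<noteq> i \<and> ((w = i' \<and> N i' \<subseteq> {s,i,t}) \<or> N w = {t})"
proof -
  obtain a b where "a \<noteq> b" "{a,b} \<in> E" "a \<notin> {s,i}" "b \<notin> {s,i}" "N a - {s,i} = {b}" "N b - {s,i} = {a}" "N a \<noteq> {b}"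
    by (rule del_iso[OF assms])
  then show ?thesis by (rule core1)
qed

lemma core2:
  assumes Nt: "N t = {i,w}" and wJ: "w \<notin> J" and ws: "w \<noteq> s" and wi: "w \<noteq> i"
    and wc: "(w = i' \<and> N i' \<subseteq> {s,i,t}) \<or> N w = {t}"
    and ab: "a \<noteq> b" "{a,b} \<in> E" "a \<notin> {s,i,t}" "b \<notin> {s,i,t}" "N a - {s,i,t} = {b}" "N b - {s,i,t} = {a}"
    and na: "N a \<noteq> {b}"
  shows False
proof -
  have bNa: "b \<in> N a" and aNb: "a \<in> N b" using ab(5,6) by auto
  have t_inN: "t \<in> N u \<longleftrightarrow> u = i \<or> u = w" for u using Nt nbrs_sym by auto
  have "N a \<inter> {s,i,t} \<noteq> {}" using ab(5) na by auto
  then have "s \<in> N a \<or> i \<in> N a \<or> t \<in> N a" by auto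
  then have aX: "a = p \<or> a = i' \<or> a = w" using s_inN i_inN t_inN ab(3) by auto
  show False
  proof (cases "a = i'")
    case True
    have wi': "w \<noteq> i'"
    proof
      assume "w = i'"
      have ii': "i \<in> N i'" using e2_facts(3) by (simp add: nbrs_def insert_commute)
      have "N i' \<subseteq> {s,i,t}"
      proof (cases "N w = {t}")
        case True
        then have "i = t" using ii' \<open>w = i'\<close> by auto
        then show ?thesis using iJ tJ by simp
      next
        case False
        then show ?thesis using wc by simp
      qed
      then have "N a \<subseteq> {s,i,t}" using True by simp
      then show False using ab(5) by auto
    qed
    then have Nw: "N w = {t}" using wc by simp
    have bJ: "b \<in> J"
    proof (rule ccontr)
      assume "b \<notin> J"
      then have "b \<in> N i' - J" using bNa True by simp
      then show False using Ni'J ab(4) by auto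
    qed
    have bs: "s \<notin> N b" using bJ s_inN pJ iJ by auto
    have bi: "i \<notin> N b" using i_inN bJ i'J ab(4) by auto
    have bt: "t \<notin> N b" using t_inN bJ wJ iJ by auto
    have Nb: "N b = {a}" using ab(6) bs bi bt by auto
    have n3b: "nbrs (E3 E J) b = {i'}" using E3_nbrs[of b] bJ Nb True i'J by auto
    have "N i' \<subseteq> {s,i,t,b}" using ab(5) True by auto
    moreover have "s \<notin> N i'"
    proof
      assume "s \<in> N i'"
      then have "i' = p" using s_inN e2_facts(4) by auto
      then show False using NpJ bNa bJ True ab(4) by auto
    qed
    moreover have "t \<notin> N i'" using t_inN wi' e2_facts(4) by auto
    ultimately have "N i' \<inter> J = {b}" using bNa bJ True iJ by auto
    then have "nbrs (E3 E J) i' = {b}" using E3_nbrs[of i'] i'J by simp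
    then show False using J2'[OF n3b] by simp
  next
    case ni': False
    show False
    proof (cases "a = p")
      case True
      have bJ: "b \<notin> J" using NpJ bNa True ab(4) by auto
      have bs: "s \<notin> N b" using s_inN True ab(1) ab(4) by auto
      have bi: "i \<notin> N b"
      proof
        assume "i \<in> N b"
        then have "b = i'" using i_inN bJ sJ tJ by auto
        then have "p \<in> N i' - J" using aNb True pJ by simp
        then show False using Ni'J pi by auto
      qed
      have bt: "t \<notin> N b"
      proof
        assume "t \<in> N b"
        then have "b = w" using t_inN ab(4) by auto
        show False
        proof (cases "w = i'")
          case True
          then have "p \<in> N i' - J" using aNb \<open>a = p\<close> pJ \<open>b = w\<close> by simp
          then show False using Ni'J pi by auto
        next
          case False
          then have "N w = {t}" using wc by simp
          then show False using aNb \<open>b = w\<close> \<open>a = p\<close> pJ tJ by auto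
        qed
      qed
      have Nb: "N b = {p}" using ab(6) bs bi bt True by auto
      have "i \<notin> N p" using i_inN True ni' sJ tJ pJ by auto
      moreover have "t \<notin> N p" using NpJ tJ st by auto
      ultimately have Np: "N p - J = {b}" using ab(5) True bJ sJ by auto
      have "N b - J = {p}" using Nb pJ by auto
      then have "N b \<inter> J \<noteq> {}" using J5'[of b p] ab(2) bJ pJ Np True by (simp add: insert_commute)
      then show False using Nb pJ by auto
    next
      case False
      then have aw: "a = w" using aX ni' by simp
      then have "N w = {t}" using wc ni' by auto
      then show False using ab(5) aw by auto
    qed
  qed
qed

lemma nice2:
  assumes "N t = {i,w}" "w \<notin> J" "w \<noteq> s" "w \<noteq> i" "(w = i' \<and> N i' \<subseteq> {s,i,t}) \<or> N w = {t}"
  shows "nice {e\<in>E. e \<inter> {s,i,t} = {}}"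
proof (rule ccontr)
  assume "\<not> nice {e\<in>E. e \<inter> {s,i,t} = {}}"
  then obtain a b where "a \<noteq> b" "{a,b} \<in> E" "a \<notin> {s,i,t}" "b \<notin> {s,i,t}" "N a - {s,i,t} = {b}" "N b - {s,i,t} = {a}" "N a \<noteq> {b}"
    by (rule del_iso)
  then show False by (rule core2[OF assms])
qed

end


context LM begin

lemma edge_at: assumes "g \<in> E" "v \<in> g" shows "\<exists>u. g = {v,u} \<and> u \<in> N v"
proof -
  obtain x y where xy: "g = {x,y}" "x \<noteq> y" using tw assms(1) unfolding twoset_def by blast
  show ?thesis
  proof (cases "v = x")
    case True
    then show ?thesis using xy assms(1) by (auto simp: nbrs_def)
  next
    case False
    then have "v = y" using xy assms(2) by auto
    then show ?thesis using xy assms(1) by (auto simp: nbrs_def insert_commute)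
  qed
qed

lemma reduceX:
  assumes "X \<subseteq> V" "X \<noteq> {}" "nice {e\<in>E. e \<inter> X = {}}"
  shows "alg_1_choosable 5 {e\<in>E. e \<inter> X = {}}"
proof (rule reduce_choosable[of "V - X"])
  show "finite (V - X)" by simp
  have "finite X" using assms(1) finite_subset by blast
  then have "card X > 0" using assms(2) by (simp add: card_gt_0_iff)
  moreover have "card (V - X) = n - card X" using assms(1) \<open>finite X\<close> by (simp add: card_Diff_subset)
  moreover have "card X \<le> n" using assms(1) card_mono[of V X] by simp
  ultimately show "card (V - X) < n" by simp
  show "edges_in (V - X) {e\<in>E. e \<inter> X = {}}"
    unfolding edges_in_def
  proof
    fix e assume e: "e \<in> {e\<in>E. e \<inter> X = {}}"
    have eE: "e \<in> E" and eX: "e \<inter> X = {}" using e by simp_all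
    have "\<exists>x y. e = {x,y} \<and> x \<noteq> y \<and> x \<in> V \<and> y \<in> V"
      using ein eE unfolding edges_in_def by (rule bspec)
    then obtain x y where xy: "e = {x,y}" "x \<noteq> y" "x \<in> V" "y \<in> V" by blast
    have "x \<in> e" "y \<in> e" unfolding xy(1) by simp_all
    then have "x \<notin> X" "y \<notin> X" using eX by blast+
    then show "\<exists>x y. e = {x, y} \<and> x \<noteq> y \<and> x \<in> V - X \<and> y \<in> V - X"
      using xy by blast
  qed
  show "nice {e\<in>E. e \<inter> X = {}}" by (rule assms(3))
  show "\<forall>m<n. \<forall>E'. simple_graph m E' \<and> nice E' \<longrightarrow> alg_1_choosable 5 E'" by (rule H)
qed

end

context LM2 begin

lemma vdist: "s \<noteq> i" "s \<noteq> p" "i \<noteq> t" "i \<noteq> i'" "t \<noteq> p" "t \<noteq> i'" "s \<noteq> i'" "p \<noteq> i"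
  using sJ tJ iJ i'J pJ e2_facts(4) pi by auto

lemma iV: "i \<in> V" using NV(2)[of i' i] e2_facts(3) by (simp add: nbrs_def)
lemma sV: "s \<in> V" using sJ JV by auto
lemma tV: "t \<in> V" using tJ JV by auto

lemma sum_single_eq:
  "Poly_Mapping.single k (3::nat) = Poly_Mapping.single k 1 + Poly_Mapping.single k 1 + Poly_Mapping.single k 1"
  "Poly_Mapping.single k (2::nat) = Poly_Mapping.single k 1 + Poly_Mapping.single k 1"
  by (simp_all add: single_add[symmetric] numeral_3_eq_3 numeral_2_eq_2)

lemma leaf1:
  assumes nc: "nice {e\<in>E. e \<inter> {s,i} = {}}"
  shows False
proof -
  define a1 where "a1 = {s,i}"
  define b1 where "b1 = {s,p}"
  define c1 where "c1 = {i,t}"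
  define d1 where "d1 = {i,i'}"
  define F1 where "F1 = {g\<in>E. g \<inter> {s,i} \<noteq> {}}"
  have EF: "E - F1 = {e\<in>E. e \<inter> {s,i} = {}}" by (auto simp: F1_def)
  have dist: "a1 \<noteq> b1" "a1 \<noteq> c1" "a1 \<noteq> d1" "b1 \<noteq> c1" "b1 \<noteq> d1" "c1 \<noteq> d1"
    unfolding a1_def b1_def c1_def d1_def using vdist st by (auto simp: doubleton_eq_iff)
  have inE: "a1 \<in> E" "b1 \<in> E" "c1 \<in> E" "d1 \<in> E"
    unfolding a1_def b1_def c1_def d1_def using Ns Ni by (auto simp: nbrs_def insert_commute)
  have F1eq: "F1 = {a1,b1,c1,d1}"
  proof
    show "F1 \<subseteq> {a1,b1,c1,d1}"
    proof
      fix g assume g: "g \<in> F1"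
      then have gE: "g \<in> E" and sg: "s \<in> g \<or> i \<in> g" by (auto simp: F1_def)
      from sg show "g \<in> {a1,b1,c1,d1}"
      proof
        assume "s \<in> g"
        then obtain u where "g = {s,u}" "u \<in> N s" using edge_at gE by blast
        then show ?thesis using Ns unfolding a1_def b1_def by auto
      next
        assume "i \<in> g"
        then obtain u where "g = {i,u}" "u \<in> N i" using edge_at gE by blast
        then show ?thesis using Ni unfolding a1_def c1_def d1_def by (auto simp: insert_commute)
      qed
    qed
    show "{a1,b1,c1,d1} \<subseteq> F1" using inE unfolding F1_def a1_def b1_def c1_def d1_def by auto
  qed
  have ch: "alg_1_choosable 5 (E - F1)"
    unfolding EF by (rule reduceX) (use nc sV iV in auto)
  define w1 where "w1 g = (if g \<in> E - F1 then 1 else if g = a1 then 0 else if g = b1 then 2 else 100::nat)" for g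
  define h1 where "h1 g = (if g = a1 then b1 else a1)" for g
  define K1 where "K1 g = (if g = a1 then 3 else if g = b1 then 1 else 0::nat)" for g
  have "alg_1_choosable 5 E"
  proof (rule leaf[OF fin tw _ ch, of w1 1 h1 K1])
    show "F1 \<subseteq> E" by (auto simp: F1_def)
    show "\<forall>g\<in>E - F1. w1 g = 1" by (simp add: w1_def)
    show "\<forall>e\<in>E - F1. \<forall>g\<in>F1. g \<inter> e \<noteq> {} \<longrightarrow> 1 < w1 g"
    proof (intro ballI impI)
      fix e g assume e: "e \<in> E - F1" and g: "g \<in> F1" and ge: "g \<inter> e \<noteq> {}"
      have "e \<inter> {s,i} = {}" using e EF by auto
      then have "g \<noteq> a1" using ge by (auto simp: a1_def)
      then show "1 < w1 g" using g by (auto simp: w1_def)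
    qed
    show "\<forall>f\<in>F1. h1 f \<in> E \<and> h1 f \<inter> f \<noteq> {} \<and> h1 f \<noteq> f"
      unfolding F1eq h1_def using inE dist by (auto simp: a1_def b1_def c1_def d1_def)
    show "\<forall>f\<in>F1. \<forall>g\<in>E. g \<inter> f \<noteq> {} \<longrightarrow> g \<noteq> f \<longrightarrow> g \<noteq> h1 f \<longrightarrow> w1 (h1 f) < w1 g"
    proof (intro ballI impI)
      fix f g assume f: "f \<in> F1" and g: "g \<in> E" "g \<inter> f \<noteq> {}" "g \<noteq> f" "g \<noteq> h1 f"
      show "w1 (h1 f) < w1 g"
      proof (cases "f = a1")
        case True
        then have "g \<in> F1" using g unfolding F1_def a1_def by auto
        then have "g = c1 \<or> g = d1" using g(3,4) True F1eq by (auto simp: h1_def)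
        moreover have "b1 \<in> F1" "c1 \<in> F1" "d1 \<in> F1" using F1eq by auto
        ultimately show ?thesis using True dist by (auto simp: h1_def w1_def)
      next
        case False
        then have "h1 f = a1" by (simp add: h1_def)
        moreover have "a1 \<in> F1" using F1eq by auto
        ultimately show ?thesis using g(4) by (auto simp: w1_def)
      qed
    qed
    show "(\<Sum>f\<in>F1. Poly_Mapping.single f (K1 f)) = (\<Sum>f\<in>F1. Poly_Mapping.single (h1 f) 1)"
      unfolding F1eq using dist by (simp add: K1_def h1_def sum_single_eq add_ac)
    show "\<forall>f\<in>F1. K1 f \<le> 4" by (simp add: K1_def)
    show "(\<Sum>f\<in>F1. K1 f) = card F1"
      unfolding F1eq using dist by (simp add: K1_def)
  qed
  then show False using notch by simp
qed


lemma leaf2: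
  assumes Nt: "N t = {i,w}" and wJ: "w \<notin> J" and ws: "w \<noteq> s" and wi: "w \<noteq> i"
    and nc: "nice {e\<in>E. e \<inter> {s,i,t} = {}}"
  shows False
proof -
  define a1 where "a1 = {s,i}"
  define b1 where "b1 = {s,p}"
  define c1 where "c1 = {i,t}"
  define d1 where "d1 = {i,i'}"
  define e1 where "e1 = {t,w}"
  define F2 where "F2 = {g\<in>E. g \<inter> {s,i,t} \<noteq> {}}"
  have EF: "E - F2 = {e\<in>E. e \<inter> {s,i,t} = {}}" by (auto simp: F2_def)
  have wt: "w \<noteq> t" using wJ tJ by auto
  have dist: "a1 \<noteq> b1" "a1 \<noteq> c1" "a1 \<noteq> d1" "a1 \<noteq> e1" "b1 \<noteq> c1" "b1 \<noteq> d1" "b1 \<noteq> e1"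
     "c1 \<noteq> d1" "c1 \<noteq> e1" "d1 \<noteq> e1"
    unfolding a1_def b1_def c1_def d1_def e1_def using vdist st ws wi wt by (auto simp: doubleton_eq_iff)
  have inE: "a1 \<in> E" "b1 \<in> E" "c1 \<in> E" "d1 \<in> E" "e1 \<in> E"
    unfolding a1_def b1_def c1_def d1_def e1_def using Ns Ni Nt by (auto simp: nbrs_def insert_commute)
  have F2eq: "F2 = {a1,b1,c1,d1,e1}"
  proof
    show "F2 \<subseteq> {a1,b1,c1,d1,e1}"
    proof
      fix g assume g: "g \<in> F2"
      then have gE: "g \<in> E" and sg: "s \<in> g \<or> i \<in> g \<or> t \<in> g" by (auto simp: F2_def)
      from sg show "g \<in> {a1,b1,c1,d1,e1}"
      proof (elim disjE)
        assume "s \<in> g"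
        then obtain u where "g = {s,u}" "u \<in> N s" using edge_at gE by blast
        then show ?thesis using Ns unfolding a1_def b1_def by auto
      next
        assume "i \<in> g"
        then obtain u where "g = {i,u}" "u \<in> N i" using edge_at gE by blast
        then show ?thesis using Ni unfolding a1_def c1_def d1_def by (auto simp: insert_commute)
      next
        assume "t \<in> g"
        then obtain u where "g = {t,u}" "u \<in> N t" using edge_at gE by blast
        then show ?thesis using Nt unfolding c1_def e1_def by (auto simp: insert_commute)
      qed
    qed
    show "{a1,b1,c1,d1,e1} \<subseteq> F2" using inE unfolding F2_def a1_def b1_def c1_def d1_def e1_def by auto
  qed
  have ch: "alg_1_choosable 5 (E - F2)"
    unfolding EF by (rule reduceX) (use nc sV iV tV in auto)
  define w2 where "w2 g = (if g \<in> E - F2 then 10 else if g = a1 then 0 else if g = c1 then 1 else 100::nat)" for g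
  define h2 where "h2 g = (if g = a1 then c1 else if g = e1 then c1 else a1)" for g
  define K2 where "K2 g = (if g = a1 then 3 else if g = c1 then 2 else 0::nat)" for g
  have inF: "a1 \<in> F2" "b1 \<in> F2" "c1 \<in> F2" "d1 \<in> F2" "e1 \<in> F2" using F2eq by auto
  have "alg_1_choosable 5 E"
  proof (rule leaf[OF fin tw _ ch, of w2 10 h2 K2])
    show "F2 \<subseteq> E" by (auto simp: F2_def)
    show "\<forall>g\<in>E - F2. w2 g = 10" by (simp add: w2_def)
    show "\<forall>e\<in>E - F2. \<forall>g\<in>F2. g \<inter> e \<noteq> {} \<longrightarrow> 10 < w2 g"
    proof (intro ballI impI)
      fix e g assume e: "e \<in> E - F2" and g: "g \<in> F2" and ge: "g \<inter> e \<noteq> {}"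
      have "e \<inter> {s,i,t} = {}" using e EF by auto
      then have "g \<noteq> a1" "g \<noteq> c1" using ge by (auto simp: a1_def c1_def)
      then show "10 < w2 g" using g by (auto simp: w2_def)
    qed
    show "\<forall>f\<in>F2. h2 f \<in> E \<and> h2 f \<inter> f \<noteq> {} \<and> h2 f \<noteq> f"
      unfolding F2eq h2_def using inE dist by (auto simp: a1_def b1_def c1_def d1_def e1_def)
    show "\<forall>f\<in>F2. \<forall>g\<in>E. g \<inter> f \<noteq> {} \<longrightarrow> g \<noteq> f \<longrightarrow> g \<noteq> h2 f \<longrightarrow> w2 (h2 f) < w2 g"
    proof (intro ballI impI)
      fix f g assume f: "f \<in> F2" and g: "g \<in> E" "g \<inter> f \<noteq> {}" "g \<noteq> f" "g \<noteq> h2 f"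
      show "w2 (h2 f) < w2 g"
      proof (cases "f = a1")
        case True
        then have gF: "g \<in> F2" using g unfolding F2_def a1_def by auto
        have "g \<noteq> a1" "g \<noteq> c1" using g(3,4) True by (auto simp: h2_def)
        then show ?thesis using True gF inF dist by (auto simp: h2_def w2_def)
      next
        case fa: False
        show ?thesis
        proof (cases "f = e1")
          case True
          have "a1 \<inter> e1 = {}" unfolding a1_def e1_def using vdist ws wi st by auto
          then have "g \<noteq> a1" "g \<noteq> c1" using g(2,4) True dist by (auto simp: h2_def)
          then show ?thesis using True inF dist by (auto simp: h2_def w2_def)
        next
          case False
          then have "h2 f = a1" using fa by (simp add: h2_def)
          then show ?thesis using g(4) inF by (auto simp: w2_def)
        qed
      qed
    qed
    show "(\<Sum>f\<in>F2. Poly_Mapping.single f (K2 f)) = (\<Sum>f\<in>F2. Poly_Mapping.single (h2 f) 1)"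
      unfolding F2eq using dist by (simp add: K2_def h2_def sum_single_eq add_ac)
    show "\<forall>f\<in>F2. K2 f \<le> 4" by (simp add: K2_def)
    show "(\<Sum>f\<in>F2. K2 f) = card F2"
      unfolding F2eq using dist by (simp add: K2_def)
  qed
  then show False using notch by simp
qed

end

context LM begin

theorem main:
  "card {j \<in> J. {i, j} \<in> E \<and> \<not> special_nbr V E J j i} \<ge> 2"
proof (rule ccontr)
  assume "\<not> ?thesis"
  then have lt: "card {j \<in> J. {i, j} \<in> E \<and> \<not> special_nbr V E J j i} < 2" by simp
  have NJ: "N i \<inter> J = {j \<in> J. {i, j} \<in> E}" by (auto simp: nbrs_def)
  have "\<exists>s\<in>N i \<inter> J. special_nbr V E J s i"
  proof (rule ccontr)
    assume "\<not> ?thesis"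
    then have "{j \<in> J. {i, j} \<in> E \<and> \<not> special_nbr V E J j i} = N i \<inter> J" using NJ by auto
    then show False using lt cardNJ by simp
  qed
  then obtain s where s: "s \<in> N i \<inter> J" "special_nbr V E J s i" by blast
  obtain p where p: "p \<in> V" "p \<notin> J" "p \<noteq> i" "N s = {i,p}" "N p \<inter> J = {s}"
    using special_facts(3)[OF s(2)] by blast
  have sJ: "s \<in> J" using s by simp
  show False
  proof (cases "card (N i \<inter> J) \<ge> 3")
    case True
    have "good_subset V E (J - {s})" by (rule k3_good[OF sJ p True])
    then have "card J \<le> card (J - {s})" using minJ by blast
    moreover have "card (J - {s}) < card J" by (rule card_Diff1_less[OF finJ sJ])
    ultimately show False by simp
  next
    case False
    then have c2: "card (N i \<inter> J) = 2" using cardNJ by simp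
    then obtain t where t: "N i \<inter> J = {s,t}" "s \<noteq> t"
    proof -
      have "card ((N i \<inter> J) - {s}) = 1" using c2 s(1) finJ by simp
      then obtain t where "(N i \<inter> J) - {s} = {t}" by (auto simp: card_Suc_eq)
      then show ?thesis using that s(1) by blast
    qed
    have tJ: "t \<in> J" using t(1) by auto
    interpret L2: LM2 n E J i i' s p t
      by unfold_locales (use sJ tJ t p in auto)
    show False
    proof (cases "nice {e\<in>E. e \<inter> {s,i} = {}}")
      case True
      then show False by (rule L2.leaf1)
    next
      case False
      then obtain w where w: "N t = {i,w}" "w \<notin> J" "w \<noteq> s" "w \<noteq> i"
          "(w = i' \<and> N i' \<subseteq> {s,i,t}) \<or> N w = {t}"
        using L2.nice1 by blast
      have "nice {e\<in>E. e \<inter> {s,i,t} = {}}" by (rule L2.nice2[OF w])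
      then show False by (rule L2.leaf2[OF w(1-4)])
    qed
  qed
qed

end


theorem lemma5p4:
  fixes n :: nat and E :: "nat set set" and J :: "nat set" and i i' :: nat
  assumes "simple_graph n E"
    and "nice E"
    and "\<not> alg_1_choosable 5 E"
    and "\<forall>m < n. \<forall>E'. simple_graph m E' \<and> nice E' \<longrightarrow> alg_1_choosable 5 E'"
    and "good_subset {1..n} E J"
    and "\<forall>J'. good_subset {1..n} E J' \<longrightarrow> card J \<le> card J'"
    and "{i, i'} \<in> E2 E J"
    and "deg (E3 E J) i \<ge> 2"
  shows "card {j \<in> J. {i, j} \<in> E \<and> \<not> special_nbr {1..n} E J j i} \<ge> 2"
proof -
  have "LM n E J i i'" by (rule LM.intro) (fact assms)+
  then show ?thesis by (rule LM.main)
qed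

end
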